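(* Let $H$ be a complex Hilbert space, $A\in B(H)$ a nonzero positive semidefinite operator, and $T\in B_{A^{1/2}}(H)$. Then $|\lambda|\le\max\{\|T\|_A,\|T^{\diamond}\|_A\}$ for every $\lambda\in\sigma_A(T)$. In particular, $\sigma_A(T)$ is bounded.
   Context: $\|x\|_A=\langle Ax,x\rangle^{1/2}$. For $S\in B(H)$, $\|S\|_A=\sup\{\|Sx\|_A : x\in\overline{R(A)},\ \|x\|_A=1\}$. $B_{A^{1/2}}(H)=\{S\in B(H): R(S^*A^{1/2})\subset R(A^{1/2})\}$. For $S\in B_{A^{1/2}}(H)$, $S^{\diamond}$ is the unique operator in $B(H)$ with $S^*A^{1/2}=A^{1/2}S^{\diamond}$ and $R(S^{\diamond})\subset\overline{R(A^{1/2})}$. $S\in B_{A^{1/2}}(H)$ is $A$-invertible in $B_{A^{1/2}}(H)$ if there is a nonzero $R\in B_{A^{1/2}}(H)$ with $ASR=ARS=A$; $\rho_A(S)=\{\lambda:\lambda I-S$ is $A$-invertible in $B_{A^{1/2}}(H)\}$, $\sigma_A(S)=\mathbb C\setminus\rho_A(S)$. *)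

theory Defs
  imports "HOL-Analysis.Analysis"
begin

text \<open>HOL has no complex inner product spaces, so we introduce them as a type class:
a real normed vector space with a compatible complex scalar multiplication and an
inner product, linear in the first argument and conjugate symmetric, inducing the norm.\<close>

class complex_inner = real_normed_vector +
  fixes scaleC :: "complex \<Rightarrow> 'a \<Rightarrow> 'a"
    and cinner :: "'a \<Rightarrow> 'a \<Rightarrow> complex"
  assumes scaleC_add_right: "scaleC c (x + y) = scaleC c x + scaleC c y"
    and scaleC_add_left: "scaleC (c + d) x = scaleC c x + scaleC d x"
    and scaleC_scaleC: "scaleC c (scaleC d x) = scaleC (c * d) x"
    and scaleC_one: "scaleC 1 x = x"
    and scaleR_scaleC: "scaleR r x = scaleC (complex_of_real r) x"
    and cinner_add_left: "cinner (x + y) z = cinner x z + cinner y z"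
    and cinner_scaleC_left: "cinner (scaleC c x) y = c * cinner x y"
    and cinner_commute: "cinner y x = cnj (cinner x y)"
    and norm_eq_sqrt_cinner: "norm x = sqrt (Re (cinner x x))"

class chilbert_space = complex_inner + complete_space

definition bounded_clinear :: "('a::complex_inner \<Rightarrow> 'b::complex_inner) \<Rightarrow> bool" where
  "bounded_clinear S \<longleftrightarrow> bounded_linear S \<and> (\<forall>c x. S (scaleC c x) = scaleC c (S x))"

definition adj :: "('a::chilbert_space \<Rightarrow> 'a) \<Rightarrow> ('a \<Rightarrow> 'a)" where
  "adj S = (THE S'. \<forall>x y. cinner (S x) y = cinner x (S' y))"

definition positive_op :: "('a::chilbert_space \<Rightarrow> 'a) \<Rightarrow> bool" where
  "positive_op A \<longleftrightarrow> bounded_clinear A \<and>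
     (\<forall>x. Im (cinner (A x) x) = 0 \<and> 0 \<le> Re (cinner (A x) x))"

definition sqrt_op :: "('a::chilbert_space \<Rightarrow> 'a) \<Rightarrow> ('a \<Rightarrow> 'a)" where
  "sqrt_op A = (THE B. positive_op B \<and> B \<circ> B = A)"

definition normA :: "('a::chilbert_space \<Rightarrow> 'a) \<Rightarrow> 'a \<Rightarrow> real" where
  "normA A x = sqrt (Re (cinner (A x) x))"

definition opnormA :: "('a::chilbert_space \<Rightarrow> 'a) \<Rightarrow> ('a \<Rightarrow> 'a) \<Rightarrow> real" where
  "opnormA A S = Sup {normA A (S x) | x. x \<in> closure (range A) \<and> normA A x = 1}"

definition BA :: "('a::chilbert_space \<Rightarrow> 'a) \<Rightarrow> ('a \<Rightarrow> 'a) set" where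
  "BA A = {S. bounded_clinear S \<and> range (adj S \<circ> sqrt_op A) \<subseteq> range (sqrt_op A)}"

definition diamond :: "('a::chilbert_space \<Rightarrow> 'a) \<Rightarrow> ('a \<Rightarrow> 'a) \<Rightarrow> ('a \<Rightarrow> 'a)" where
  "diamond A S = (THE R. bounded_clinear R \<and> adj S \<circ> sqrt_op A = sqrt_op A \<circ> R
                         \<and> range R \<subseteq> closure (range (sqrt_op A)))"

definition A_invertible :: "('a::chilbert_space \<Rightarrow> 'a) \<Rightarrow> ('a \<Rightarrow> 'a) \<Rightarrow> bool" where
  "A_invertible A S \<longleftrightarrow> S \<in> BA A \<and>
     (\<exists>R\<in>BA A. R \<noteq> (\<lambda>_. 0) \<and> A \<circ> S \<circ> R = A \<and> A \<circ> R \<circ> S = A)"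

definition spectrumA :: "('a::chilbert_space \<Rightarrow> 'a) \<Rightarrow> ('a \<Rightarrow> 'a) \<Rightarrow> complex set" where
  "spectrumA A S = - {l. A_invertible A (\<lambda>x. scaleC l x - S x)}"

end

theory Submission
  imports Defs "HOL-Computational_Algebra.Formal_Power_Series"
begin


lemma scaleC_zero_left [simp]: "scaleC 0 (x::'a::complex_inner) = 0"
  by (metis of_real_0 scaleR_zero_left scaleR_scaleC)

lemma scaleC_zero_right [simp]: "scaleC c (0::'a::complex_inner) = 0"
proof -
  have "scaleC c 0 = scaleC c 0 + scaleC c 0" using scaleC_add_right[of c 0 0] by simp
  then show ?thesis by simp
qed

lemma scaleC_minus_left: "scaleC (- c) (x::'a::complex_inner) = - scaleC c x"
proof -
  have "scaleC (-c) x + scaleC c x = 0" using scaleC_add_left[of "-c" c x] by simp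
  then show ?thesis by (simp add: eq_neg_iff_add_eq_0)
qed

lemma scaleC_minus_right: "scaleC c (- x::'a::complex_inner) = - scaleC c x"
proof -
  have "scaleC c (-x) + scaleC c x = 0" using scaleC_add_right[of c "-x" x] by simp
  then show ?thesis by (simp add: eq_neg_iff_add_eq_0)
qed

lemma scaleC_diff_left: "scaleC (c - d) (x::'a::complex_inner) = scaleC c x - scaleC d x"
  using scaleC_add_left[of c "-d" x] by (simp add: scaleC_minus_left)

lemma scaleC_diff_right: "scaleC c (x - y::'a::complex_inner) = scaleC c x - scaleC c y"
  using scaleC_add_right[of c x "-y"] by (simp add: scaleC_minus_right)

lemma scaleC_of_real: "scaleC (complex_of_real r) (x::'a::complex_inner) = scaleR r x"
  by (rule scaleR_scaleC[symmetric])

lemma scaleC_sum_right: "scaleC c (sum f A :: 'a::complex_inner) = sum (\<lambda>i. scaleC c (f i)) A"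
  by (induct A rule: infinite_finite_induct) (auto simp: scaleC_add_right)

lemma scaleC_sum_left: "scaleC (sum f A) (x::'a::complex_inner) = sum (\<lambda>i. scaleC (f i) x) A"
  by (induct A rule: infinite_finite_induct) (auto simp: scaleC_add_left)

lemma scaleC_eq_0_iff_aux: "c \<noteq> 0 \<Longrightarrow> scaleC c (x::'a::complex_inner) = 0 \<Longrightarrow> x = 0"
  by (metis scaleC_scaleC scaleC_one scaleC_zero_right left_inverse)

lemma cinner_add_right: "cinner (x::'a::complex_inner) (y + z) = cinner x y + cinner x z"
  by (metis cinner_commute cinner_add_left complex_cnj_add)

lemma cinner_scaleC_right: "cinner (x::'a::complex_inner) (scaleC c y) = cnj c * cinner x y"
  by (metis cinner_commute cinner_scaleC_left complex_cnj_mult complex_cnj_cnj)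

lemma cinner_zero_left [simp]: "cinner 0 (y::'a::complex_inner) = 0"
  using cinner_add_left[of 0 0 y] by simp

lemma cinner_zero_right [simp]: "cinner (x::'a::complex_inner) 0 = 0"
  using cinner_add_right[of x 0 0] by simp

lemma cinner_minus_left: "cinner (- x) (y::'a::complex_inner) = - cinner x y"
  using cinner_add_left[of "-x" x y] by (simp add: add_eq_0_iff2)

lemma cinner_minus_right: "cinner (x::'a::complex_inner) (- y) = - cinner x y"
  using cinner_add_right[of x "-y" y] by (simp add: add_eq_0_iff2)

lemma cinner_diff_left: "cinner (x - y) (z::'a::complex_inner) = cinner x z - cinner y z"
  using cinner_add_left[of x "-y" z] by (simp add: cinner_minus_left)

lemma cinner_diff_right: "cinner (x::'a::complex_inner) (y - z) = cinner x y - cinner x z"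
  using cinner_add_right[of x y "-z"] by (simp add: cinner_minus_right)

lemma cinner_sum_left: "cinner (sum f A) (y::'a::complex_inner) = (\<Sum>i\<in>A. cinner (f i) y)"
  by (induct A rule: infinite_finite_induct) (auto simp: cinner_add_left)

lemma cinner_sum_right: "cinner (y::'a::complex_inner) (sum f A) = (\<Sum>i\<in>A. cinner y (f i))"
  by (induct A rule: infinite_finite_induct) (auto simp: cinner_add_right)

lemma Im_cinner_self [simp]: "Im (cinner (x::'a::complex_inner) x) = 0"
proof -
  have "Im (cinner x x) = Im (cnj (cinner x x))" using cinner_commute[of x x] by simp
  then show ?thesis by simp
qed

lemma Re_cinner_self: "Re (cinner (x::'a::complex_inner) x) = (norm x)\<^sup>2"
proof -
  have "Re (cinner x x) \<ge> 0"
  proof (rule ccontr)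
    assume "\<not> Re (cinner x x) \<ge> 0"
    then have "sqrt (Re (cinner x x)) < 0" by simp
    then show False using norm_eq_sqrt_cinner[of x] norm_ge_zero[of x] by linarith
  qed
  then show ?thesis using norm_eq_sqrt_cinner[of x] by simp
qed

lemma cinner_self: "cinner (x::'a::complex_inner) x = complex_of_real ((norm x)\<^sup>2)"
  using Im_cinner_self[of x] Re_cinner_self[of x] by (simp add: complex_eq_iff)

lemma cinner_self_eq_0 [simp]: "cinner (x::'a::complex_inner) x = 0 \<longleftrightarrow> x = 0"
  by (simp add: cinner_self)

lemma norm_scaleC: "norm (scaleC c (x::'a::complex_inner)) = cmod c * norm x"
proof -
  have "(norm (scaleC c x))\<^sup>2 = Re (cinner (scaleC c x) (scaleC c x))" by (simp add: Re_cinner_self)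
  also have "\<dots> = Re (c * cnj c * cinner x x)"
    by (simp add: cinner_scaleC_left cinner_scaleC_right mult.assoc)
  also have "\<dots> = (cmod c)\<^sup>2 * (norm x)\<^sup>2"
    by (simp add: cinner_self complex_mult_cnj cmod_power2 del: of_real_power)
  finally have "(norm (scaleC c x))\<^sup>2 = (cmod c * norm x)\<^sup>2" by (simp add: power_mult_distrib)
  then show ?thesis by (simp add: power2_eq_iff_nonneg)
qed

lemma cinner_Cauchy_Schwarz: "cmod (cinner (x::'a::complex_inner) y) \<le> norm x * norm y"
proof (cases "y = 0")
  case True then show ?thesis by simp
next
  case False
  define t where "t = cinner x y / cinner y y"
  have yy: "cinner y y = complex_of_real ((norm y)\<^sup>2)" by (rule cinner_self)
  have ny: "norm y > 0" using False by simp
  have "0 \<le> Re (cinner (x - scaleC t y) (x - scaleC t y))"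
    by (simp add: Re_cinner_self)
  also have "cinner (x - scaleC t y) (x - scaleC t y)
      = cinner x x - cnj t * cinner x y - t * cinner y x + t * cnj t * cinner y y"
    by (simp add: cinner_diff_left cinner_diff_right cinner_scaleC_left cinner_scaleC_right
        algebra_simps)
  also have "t * cnj t * cinner y y = cnj t * cinner x y"
    using False by (simp add: t_def)
  also have "cinner y x = cnj (cinner x y)" by (rule cinner_commute)
  finally have "0 \<le> Re (cinner x x - t * cnj (cinner x y))" by simp
  also have "t * cnj (cinner x y) = complex_of_real ((cmod (cinner x y))\<^sup>2 / (norm y)\<^sup>2)"
    by (simp add: t_def yy complex_mult_cnj cmod_power2 del: of_real_power)
  finally have "(cmod (cinner x y))\<^sup>2 / (norm y)\<^sup>2 \<le> (norm x)\<^sup>2"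
    by (simp add: Re_cinner_self)
  then have "(cmod (cinner x y))\<^sup>2 \<le> (norm x * norm y)\<^sup>2"
    using ny by (simp add: field_simps power_mult_distrib)
  then show ?thesis
    by (meson mult_nonneg_nonneg norm_ge_zero power2_le_imp_le)
qed

lemma bounded_bilinear_cinner: "bounded_bilinear (cinner :: 'a::complex_inner \<Rightarrow> _)"
proof
  fix a a' b b' :: 'a and r :: real
  show "cinner (a + a') b = cinner a b + cinner a' b" by (rule cinner_add_left)
  show "cinner a (b + b') = cinner a b + cinner a b'" by (rule cinner_add_right)
  show "cinner (scaleR r a) b = scaleR r (cinner a b)"
    by (simp add: scaleR_scaleC cinner_scaleC_left scaleR_conv_of_real)
  show "cinner a (scaleR r b) = scaleR r (cinner a b)"
    by (simp add: scaleR_scaleC cinner_scaleC_right scaleR_conv_of_real)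
next
  show "\<exists>K. \<forall>a b. norm (cinner a b) \<le> norm a * norm b * K"
    by (rule exI[of _ 1]) (simp add: cinner_Cauchy_Schwarz)
qed

lemma bounded_linear_scaleC_right: "bounded_linear (scaleC c :: 'a::complex_inner \<Rightarrow> 'a)"
proof
  fix x y :: 'a and r :: real
  show "scaleC c (x + y) = scaleC c x + scaleC c y" by (rule scaleC_add_right)
  show "scaleC c (scaleR r x) = scaleR r (scaleC c x)"
    by (simp add: scaleR_scaleC scaleC_scaleC mult.commute)
  show "\<exists>K. \<forall>x. norm (scaleC c x) \<le> norm x * K"
    by (rule exI[of _ "cmod c"]) (simp add: norm_scaleC mult.commute)
qed

lemma bounded_linear_scaleC_left: "bounded_linear (\<lambda>c. scaleC c (x::'a::complex_inner))"
proof
  fix c d :: complex and r :: real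
  show "scaleC (c + d) x = scaleC c x + scaleC d x" by (rule scaleC_add_left)
  show "scaleC (scaleR r c) x = scaleR r (scaleC c x)"
    by (simp add: scaleR_scaleC scaleC_scaleC scaleR_conv_of_real)
  show "\<exists>K. \<forall>c. norm (scaleC c x) \<le> norm c * K"
    by (rule exI[of _ "norm x"]) (simp add: norm_scaleC)
qed

lemma cinner_ext_left: "(\<And>z. cinner x z = cinner y z) \<Longrightarrow> x = (y::'a::complex_inner)"
  by (metis cinner_diff_left cinner_self_eq_0 right_minus_eq)

lemma cinner_ext_right: "(\<And>z. cinner z x = cinner z y) \<Longrightarrow> x = (y::'a::complex_inner)"
  by (metis cinner_diff_right cinner_self_eq_0 right_minus_eq)


subsection \<open>Bounded complex-linear operators\<close>

lemma bclD: "bounded_clinear S \<Longrightarrow> bounded_linear S"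
  by (simp add: bounded_clinear_def)

lemma bcl_scaleC: "bounded_clinear S \<Longrightarrow> S (scaleC c x) = scaleC c (S x)"
  by (simp add: bounded_clinear_def)

lemma bcl_add: "bounded_clinear S \<Longrightarrow> S (x + y) = S x + S y"
  using bclD linear_add bounded_linear.linear by blast

lemma bcl_diff: "bounded_clinear S \<Longrightarrow> S (x - y) = S x - S y"
  using bclD linear_diff bounded_linear.linear by blast

lemma bcl_minus: "bounded_clinear S \<Longrightarrow> S (- x) = - S x"
  using bclD linear_neg bounded_linear.linear by blast

lemma bcl_zero: "bounded_clinear S \<Longrightarrow> S 0 = 0"
  using bclD linear_0 bounded_linear.linear by blast

lemma bcl_sum: "bounded_clinear S \<Longrightarrow> S (sum f A) = (\<Sum>i\<in>A. S (f i))"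
  using bclD linear_sum bounded_linear.linear by blast

lemma bcl_bound: "bounded_clinear S \<Longrightarrow> \<exists>K>0. \<forall>x. norm (S x) \<le> norm x * K"
  using bclD bounded_linear.pos_bounded by blast

lemma bcl_tendsto: "bounded_clinear S \<Longrightarrow> (f \<longlongrightarrow> l) F \<Longrightarrow> ((\<lambda>n. S (f n)) \<longlongrightarrow> S l) F"
  using bclD bounded_linear.tendsto by blast

lemma bcl_cont: "bounded_clinear S \<Longrightarrow> continuous_on X S"
  using bclD linear_continuous_on by blast

lemma bcl_suminf: "bounded_clinear S \<Longrightarrow> summable f \<Longrightarrow> S (suminf f) = (\<Sum>n. S (f n))"
  using bclD bounded_linear.suminf by metis

lemma bcl_intro:
  assumes "\<And>x y. S (x + y) = S x + S y" "\<And>c x. S (scaleC c x) = scaleC c (S x)"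
    "\<And>x. norm (S x) \<le> norm x * K"
  shows "bounded_clinear S"
  unfolding bounded_clinear_def
proof (intro conjI allI)
  show "bounded_linear S"
  proof
    fix x y r
    show "S (x + y) = S x + S y" by (rule assms(1))
    show "S (scaleR r x) = scaleR r (S x)" by (simp add: scaleR_scaleC assms(2))
    show "\<exists>K. \<forall>x. norm (S x) \<le> norm x * K" using assms(3) by blast
  qed
qed (rule assms(2))

lemma bcl_id: "bounded_clinear (\<lambda>x. x)"
  by (rule bcl_intro[where K=1]) auto

lemma bcl_zero_op: "bounded_clinear (\<lambda>x. 0)"
  by (rule bcl_intro[where K=1]) auto

lemma bcl_compose: "bounded_clinear S \<Longrightarrow> bounded_clinear R \<Longrightarrow> bounded_clinear (\<lambda>x. S (R x))"
  unfolding bounded_clinear_def by (auto intro: bounded_linear_compose)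

lemma bcl_compose': "bounded_clinear S \<Longrightarrow> bounded_clinear R \<Longrightarrow> bounded_clinear (S \<circ> R)"
  using bcl_compose[of S R] by (simp add: o_def)

lemma bcl_add_op: "bounded_clinear S \<Longrightarrow> bounded_clinear R \<Longrightarrow> bounded_clinear (\<lambda>x. S x + R x)"
  unfolding bounded_clinear_def using bounded_linear_add by (auto simp: scaleC_add_right)

lemma bcl_diff_op: "bounded_clinear S \<Longrightarrow> bounded_clinear R \<Longrightarrow> bounded_clinear (\<lambda>x. S x - R x)"
  unfolding bounded_clinear_def using bounded_linear_sub by (auto simp: scaleC_diff_right)

lemma bcl_scaleC_op: "bounded_clinear S \<Longrightarrow> bounded_clinear (\<lambda>x. scaleC c (S x))"
  unfolding bounded_clinear_def
  using bounded_linear_compose[OF bounded_linear_scaleC_right]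
  by (auto simp: scaleC_scaleC mult.commute)

lemma bcl_scaleC_id: "bounded_clinear (\<lambda>x. scaleC c x)"
  using bcl_scaleC_op[OF bcl_id] .

lemma bcl_funpow: fixes S :: "'a::complex_inner \<Rightarrow> 'a" assumes "bounded_clinear S" shows "bounded_clinear (S ^^ n)"
proof (induct n)
  case 0 have "S ^^ 0 = (\<lambda>x. x)" by (simp add: id_def)
  show ?case unfolding \<open>S ^^ 0 = (\<lambda>x. x)\<close> by (rule bcl_id)
next
  case (Suc n) then show ?case using bcl_compose[OF assms Suc] by (simp add: o_def)
qed

definition csubspace :: "'a::complex_inner set \<Rightarrow> bool" where
  "csubspace M \<longleftrightarrow> 0 \<in> M \<and> (\<forall>x\<in>M. \<forall>y\<in>M. x + y \<in> M) \<and> (\<forall>c. \<forall>x\<in>M. scaleC c x \<in> M)"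

lemma csubspace_add: "csubspace M \<Longrightarrow> x \<in> M \<Longrightarrow> y \<in> M \<Longrightarrow> x + y \<in> M"
  by (simp add: csubspace_def)

lemma csubspace_scaleC: "csubspace M \<Longrightarrow> x \<in> M \<Longrightarrow> scaleC c x \<in> M"
  by (simp add: csubspace_def)

lemma csubspace_0: "csubspace M \<Longrightarrow> 0 \<in> M"
  by (simp add: csubspace_def)

lemma csubspace_minus: "csubspace M \<Longrightarrow> x \<in> M \<Longrightarrow> - x \<in> M"
  using csubspace_scaleC[of M x "-1"] by (simp add: scaleC_minus_left scaleC_one)

lemma csubspace_diff: "csubspace M \<Longrightarrow> x \<in> M \<Longrightarrow> y \<in> M \<Longrightarrow> x - y \<in> M"
  using csubspace_add[of M x "-y"] csubspace_minus by fastforce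

lemma csubspace_scaleR: "csubspace M \<Longrightarrow> x \<in> M \<Longrightarrow> scaleR r x \<in> M"
  by (simp add: scaleR_scaleC csubspace_scaleC)

lemma csubspace_range: "bounded_clinear S \<Longrightarrow> csubspace (range S)"
  unfolding csubspace_def
proof (intro conjI ballI allI)
  assume S: "bounded_clinear S"
  show "0 \<in> range S" using bcl_zero[OF S] by (metis rangeI)
  fix x y assume "x \<in> range S" "y \<in> range S"
  then obtain a b where "x = S a" "y = S b" by auto
  then show "x + y \<in> range S" using bcl_add[OF S, of a b] by (metis rangeI)
next
  fix c x assume S: "bounded_clinear S" and "x \<in> range S"
  then obtain a where "x = S a" by auto
  then show "scaleC c x \<in> range S" using bcl_scaleC[OF S, of c a] by (metis rangeI)
qed

lemma csubspace_closure:
  assumes M: "csubspace M" shows "csubspace (closure M)"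
  unfolding csubspace_def
proof (intro conjI ballI allI)
  show "0 \<in> closure M" using csubspace_0[OF M] closure_subset by blast
  fix x y assume "x \<in> closure M" "y \<in> closure M"
  then obtain f g where f: "\<forall>n. f n \<in> M" "f \<longlonglongrightarrow> x" and g: "\<forall>n. g n \<in> M" "g \<longlonglongrightarrow> y"
    by (meson closure_sequential)
  have "(\<lambda>n. f n + g n) \<longlonglongrightarrow> x + y" using f g by (intro tendsto_add) auto
  moreover have "\<forall>n. f n + g n \<in> M" using f g csubspace_add[OF M] by blast
  ultimately show "x + y \<in> closure M" by (meson closure_sequential)
next
  fix c x assume "x \<in> closure M"
  then obtain f where f: "\<forall>n. f n \<in> M" "f \<longlonglongrightarrow> x"
    by (meson closure_sequential)
  have "(\<lambda>n. scaleC c (f n)) \<longlonglongrightarrow> scaleC c x"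
    using f bounded_linear.tendsto[OF bounded_linear_scaleC_right] by blast
  moreover have "\<forall>n. scaleC c (f n) \<in> M" using f csubspace_scaleC[OF M] by blast
  ultimately show "scaleC c x \<in> closure M" by (meson closure_sequential)
qed

subsection \<open>Orthogonality and the projection theorem\<close>

lemma norm_diff_sq: "(norm (x - y))\<^sup>2 = (norm x)\<^sup>2 - 2 * Re (cinner x y) + (norm (y::'a::complex_inner))\<^sup>2"
proof -
  have "(norm (x - y))\<^sup>2 = Re (cinner (x - y) (x - y))" by (simp add: Re_cinner_self)
  also have "\<dots> = Re (cinner x x) - Re (cinner x y) - Re (cinner y x) + Re (cinner y y)"
    by (simp add: cinner_diff_left cinner_diff_right)
  also have "Re (cinner y x) = Re (cinner x y)" by (subst cinner_commute) simp
  finally show ?thesis by (simp add: Re_cinner_self)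
qed

lemma norm_add_sq: "(norm (x + y))\<^sup>2 = (norm x)\<^sup>2 + 2 * Re (cinner x y) + (norm (y::'a::complex_inner))\<^sup>2"
  using norm_diff_sq[of x "-y"] by (simp add: cinner_minus_right)

lemma parallelogram: "(norm (x + y))\<^sup>2 + (norm (x - y))\<^sup>2 = 2 * (norm x)\<^sup>2 + 2 * (norm (y::'a::complex_inner))\<^sup>2"
  by (simp add: norm_add_sq norm_diff_sq)

lemma sq_bound_aux: "0 \<le> (d::real) \<Longrightarrow> 0 \<le> e \<Longrightarrow> e \<le> 1 \<Longrightarrow> (d + e)\<^sup>2 \<le> d\<^sup>2 + (2 * d + 1) * e"
proof -
  assume "0 \<le> d" "0 \<le> e" "e \<le> 1"
  then have "e * e \<le> 1 * e" by (intro mult_right_mono) auto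
  then show ?thesis by (simp add: power2_eq_square algebra_simps)
qed

lemma orth_of_min:
  fixes z :: "'a::complex_inner"
  assumes "\<And>t. norm z \<le> norm (z - scaleC t m)"
  shows "cinner z m = 0"
proof (cases "m = 0")
  case True then show ?thesis by simp
next
  case False
  define t where "t = cinner z m / cinner m m"
  have mm: "cinner m m = complex_of_real ((norm m)\<^sup>2)" by (rule cinner_self)
  have nm: "norm m > 0" using False by simp
  have "(norm z)\<^sup>2 \<le> (norm (z - scaleC t m))\<^sup>2"
    using assms[of t] by (simp add: power_mono)
  also have "\<dots> = (norm z)\<^sup>2 - 2 * Re (cinner z (scaleC t m)) + (cmod t * norm m)\<^sup>2"
    by (simp add: norm_diff_sq norm_scaleC)
  also have "Re (cinner z (scaleC t m)) = (cmod (cinner z m))\<^sup>2 / (norm m)\<^sup>2"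
    by (simp add: cinner_scaleC_right t_def mm complex_mult_cnj cmod_power2 mult.commute
        del: of_real_power)
  also have "(cmod t * norm m)\<^sup>2 = (cmod (cinner z m))\<^sup>2 / (norm m)\<^sup>2"
    using nm by (simp add: t_def mm norm_divide power_mult_distrib power_divide del: of_real_power)
      (simp add: power2_eq_square power4_eq_xxxx field_simps)
  finally have "(cmod (cinner z m))\<^sup>2 / (norm m)\<^sup>2 \<le> 0" by simp
  then have "(cmod (cinner z m))\<^sup>2 \<le> 0" using nm by (simp add: divide_le_0_iff)
  then show ?thesis by simp
qed

lemma projection_exists:
  fixes M :: "'a::chilbert_space set"
  assumes M: "csubspace M" "closed M"
  shows "\<exists>p\<in>M. \<forall>m\<in>M. cinner (x - p) m = 0"
proof -
  define D where "D = (\<lambda>m. norm (x - m)) ` M"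
  define d where "d = Inf D"
  have Dne: "D \<noteq> {}" using csubspace_0[OF M(1)] by (auto simp: D_def)
  have Dbdd: "bdd_below D" by (auto simp: D_def intro!: bdd_belowI[of _ 0])
  have d_le: "d \<le> norm (x - m)" if "m \<in> M" for m
    unfolding d_def using Dbdd that by (auto simp: D_def intro!: cInf_lower)
  have d0: "0 \<le> d" unfolding d_def using Dne by (auto simp: D_def intro!: cInf_greatest)
  have "\<exists>m\<in>M. norm (x - m) < d + 1 / (Suc n)" for n
  proof -
    have "Inf D < d + 1 / Suc n" by (simp add: d_def)
    then obtain e where "e \<in> D" "e < d + 1 / Suc n" using cInf_lessD[OF Dne] by blast
    then show ?thesis by (auto simp: D_def)
  qed
  then obtain f where f: "\<And>n. f n \<in> M" "\<And>n. norm (x - f n) < d + 1 / Suc n" by metis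
  have key: "(norm (f a - f b))\<^sup>2 \<le> (8 * d + 4) * (1 / Suc a + 1 / Suc b)" for a b
  proof -
    define u where "u = x - f a"
    define v where "v = x - f b"
    have mid: "scaleR (1/2) (f a + f b) \<in> M" using f(1) M(1) by (simp add: csubspace_add csubspace_scaleR)
    have "u + v = scaleR 2 (x - scaleR (1/2) (f a + f b))"
      by (simp add: u_def v_def algebra_simps scaleR_2)
    then have "norm (u + v) = 2 * norm (x - scaleR (1/2) (f a + f b))" by simp
    then have uv: "norm (u + v) \<ge> 2 * d" using d_le[OF mid] by simp
    have "u - v = f b - f a" by (simp add: u_def v_def)
    then have "(norm (f a - f b))\<^sup>2 = (norm (u - v))\<^sup>2" by (simp add: norm_minus_commute)
    also have "\<dots> = 2 * (norm u)\<^sup>2 + 2 * (norm v)\<^sup>2 - (norm (u + v))\<^sup>2"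
      using parallelogram[of u v] by simp
    finally have E: "(norm (f a - f b))\<^sup>2 = 2 * (norm u)\<^sup>2 + 2 * (norm v)\<^sup>2 - (norm (u + v))\<^sup>2" .
    have W: "(norm (u + v))\<^sup>2 \<ge> 4 * d\<^sup>2"
    proof -
      have "(norm (u + v))\<^sup>2 \<ge> (2 * d)\<^sup>2" using uv d0 by (intro power_mono) auto
      then show ?thesis by (simp add: power_mult_distrib)
    qed
    define ea where "ea = 1 / real (Suc a)"
    define eb where "eb = 1 / real (Suc b)"
    have ea: "0 \<le> ea" "ea \<le> 1" and eb: "0 \<le> eb" "eb \<le> 1" by (auto simp: ea_def eb_def)
    define pa where "pa = (2 * d + 1) * ea"
    define pb where "pb = (2 * d + 1) * eb"
    have "(norm u)\<^sup>2 \<le> (d + ea)\<^sup>2" using f(2)[of a] by (simp add: u_def ea_def power_mono)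
    also have "\<dots> \<le> d\<^sup>2 + (2 * d + 1) * ea" using ea d0 by (intro sq_bound_aux) auto
    finally have U: "(norm u)\<^sup>2 \<le> d\<^sup>2 + pa" unfolding pa_def .
    have "(norm v)\<^sup>2 \<le> (d + eb)\<^sup>2" using f(2)[of b] by (simp add: v_def eb_def power_mono)
    also have "\<dots> \<le> d\<^sup>2 + (2 * d + 1) * eb" using eb d0 by (intro sq_bound_aux) auto
    finally have V: "(norm v)\<^sup>2 \<le> d\<^sup>2 + pb" unfolding pb_def .
    have "(norm (f a - f b))\<^sup>2 \<le> 2 * (d\<^sup>2 + pa) + 2 * (d\<^sup>2 + pb) - 4 * d\<^sup>2"
      using E U V W by (smt (verit))
    also have "\<dots> = (4 * d + 2) * (ea + eb)" by (simp add: algebra_simps pa_def pb_def)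
    also have "\<dots> \<le> (8 * d + 4) * (ea + eb)" using ea eb d0 by (intro mult_right_mono) auto
    finally show ?thesis by (simp add: ea_def eb_def)
  qed
  have "Cauchy f"
  proof (rule metric_CauchyI)
    fix e :: real assume e: "e > 0"
    have pos: "(8 * d + 4) > 0" using d0 by simp
    obtain N0 :: nat where N0: "(8 * d + 4) * 2 / e\<^sup>2 < real N0"
      using reals_Archimedean2 by blast
    define N where "N = N0"
    have N: "(8 * d + 4) * 2 / e\<^sup>2 < real (Suc N)" using N0 by (simp add: N_def)
    have e2: "e\<^sup>2 > 0" using e by simp
    have N': "(8 * d + 4) * 2 < e\<^sup>2 * real (Suc N)"
      using N e2 by (simp add: divide_less_eq mult.commute)
    have fin: "(8 * d + 4) * (2 / real (Suc N)) < e\<^sup>2"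
      using N' by (simp add: divide_less_eq mult.commute)
    show "\<exists>N. \<forall>m\<ge>N. \<forall>n\<ge>N. dist (f m) (f n) < e"
    proof (intro exI allI impI)
      fix a b assume a: "a \<ge> N" and b: "b \<ge> N"
      have "1 / real (Suc a) \<le> 1 / Suc N" using a by (simp add: frac_le)
      moreover have "1 / real (Suc b) \<le> 1 / Suc N" using b by (simp add: frac_le)
      ultimately have s: "1 / real (Suc a) + 1 / real (Suc b) \<le> 2 / Suc N" by simp
      have "(norm (f a - f b))\<^sup>2 \<le> (8 * d + 4) * (1 / real (Suc a) + 1 / real (Suc b))"
        by (rule key)
      also have "\<dots> \<le> (8 * d + 4) * (2 / Suc N)"
        using s pos by (intro mult_left_mono) auto
      also have "\<dots> < e\<^sup>2" by (rule fin)
      finally have "(norm (f a - f b))\<^sup>2 < e\<^sup>2" .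
      then show "dist (f a) (f b) < e" using e by (simp add: dist_norm power_less_imp_less_base)
    qed
  qed
  then obtain p where p: "f \<longlonglongrightarrow> p" using complete_UNIV convergent_eq_Cauchy by blast
  have pM: "p \<in> M" using M(2) f(1) p closed_sequential_limits by blast
  have "(\<lambda>n. norm (x - f n)) \<longlonglongrightarrow> norm (x - p)" using p by (intro tendsto_intros)
  moreover have "(\<lambda>n. d + 1 / Suc n) \<longlonglongrightarrow> d + 0"
    by (intro tendsto_intros LIMSEQ_Suc[OF lim_inverse_n'])
  ultimately have "norm (x - p) \<le> d"
    using f(2) by (intro LIMSEQ_le[of "\<lambda>n. norm (x - f n)" _ "\<lambda>n. d + 1 / Suc n"]) (auto intro: less_imp_le)
  then have pmin: "norm (x - p) \<le> norm (x - m)" if "m \<in> M" for m using d_le[OF that] by simp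
  show ?thesis
  proof (intro bexI[OF _ pM] ballI)
    fix m assume m: "m \<in> M"
    show "cinner (x - p) m = 0"
    proof (rule orth_of_min)
      fix t
      have "p + scaleC t m \<in> M" using m pM M(1) by (simp add: csubspace_add csubspace_scaleC)
      then have "norm (x - p) \<le> norm (x - (p + scaleC t m))" by (rule pmin)
      then show "norm (x - p) \<le> norm (x - p - scaleC t m)" by (simp add: algebra_simps)
    qed
  qed
qed


definition proj :: "'a::chilbert_space set \<Rightarrow> 'a \<Rightarrow> 'a" where
  "proj M x = (SOME p. p \<in> M \<and> (\<forall>m\<in>M. cinner (x - p) m = 0))"

locale closed_csub =
  fixes M :: "'a::chilbert_space set"
  assumes sub: "csubspace M" and clo: "closed M"
begin

lemma proj_spec: "proj M x \<in> M \<and> (\<forall>m\<in>M. cinner (x - proj M x) m = 0)"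
proof -
  have "\<exists>p. p \<in> M \<and> (\<forall>m\<in>M. cinner (x - p) m = 0)" using projection_exists[OF sub clo, of x] by blast
  then show ?thesis unfolding proj_def by (rule someI_ex)
qed

lemma proj_in: "proj M x \<in> M" using proj_spec by blast

lemma proj_orth: "m \<in> M \<Longrightarrow> cinner (x - proj M x) m = 0" using proj_spec by blast

lemma proj_orth': "m \<in> M \<Longrightarrow> cinner m (x - proj M x) = 0"
  using proj_orth[of m x] cinner_commute[of m "x - proj M x"] by simp

lemma orth_self_zero: "v \<in> M \<Longrightarrow> (\<And>m. m \<in> M \<Longrightarrow> cinner v m = 0) \<Longrightarrow> v = 0"
proof -
  assume "v \<in> M" "\<And>m. m \<in> M \<Longrightarrow> cinner v m = 0"
  then have "cinner v v = 0" by blast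
  then show "v = 0" by simp
qed

lemma proj_unique:
  assumes "p \<in> M" "\<And>m. m \<in> M \<Longrightarrow> cinner (x - p) m = 0"
  shows "proj M x = p"
proof -
  have "p - proj M x \<in> M" using assms(1) proj_in sub by (simp add: csubspace_diff)
  moreover have "cinner (p - proj M x) m = 0" if "m \<in> M" for m
  proof -
    have "p - proj M x = (x - proj M x) - (x - p)" by simp
    then show ?thesis using proj_orth[OF that, of x] assms(2)[OF that] by (simp add: cinner_diff_left)
  qed
  ultimately show ?thesis using orth_self_zero by fastforce
qed

lemma proj_id: "x \<in> M \<Longrightarrow> proj M x = x"
  by (rule proj_unique) auto

lemma proj_zero: "(\<And>m. m \<in> M \<Longrightarrow> cinner x m = 0) \<Longrightarrow> proj M x = 0"
  by (rule proj_unique) (auto simp: csubspace_0[OF sub])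

lemma proj_bcl: "bounded_clinear (proj M)"
proof (rule bcl_intro[where K=1])
  fix x y
  show "proj M (x + y) = proj M x + proj M y"
    apply (rule proj_unique)
     apply (simp add: csubspace_add[OF sub] proj_in)
  proof -
    fix m assume m: "m \<in> M"
    have eq: "x + y - (proj M x + proj M y) = (x - proj M x) + (y - proj M y)" by simp
    show "cinner (x + y - (proj M x + proj M y)) m = 0"
      unfolding eq cinner_add_left using proj_orth[OF m, of x] proj_orth[OF m, of y] by simp
  qed
next
  fix c x
  show "proj M (scaleC c x) = scaleC c (proj M x)"
    apply (rule proj_unique)
     apply (simp add: csubspace_scaleC[OF sub] proj_in)
  proof -
    fix m assume m: "m \<in> M"
    have "scaleC c x - scaleC c (proj M x) = scaleC c (x - proj M x)" by (simp add: scaleC_diff_right)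
    then show "cinner (scaleC c x - scaleC c (proj M x)) m = 0"
      using proj_orth[OF m, of x] by (simp add: cinner_scaleC_left)
  qed
next
  fix x
  have "(norm x)\<^sup>2 = (norm (proj M x + (x - proj M x)))\<^sup>2" by simp
  also have "\<dots> = (norm (proj M x))\<^sup>2 + 2 * Re (cinner (proj M x) (x - proj M x)) + (norm (x - proj M x))\<^sup>2"
    by (rule norm_add_sq)
  also have "cinner (proj M x) (x - proj M x) = 0" using proj_orth'[OF proj_in] by simp
  finally have "(norm (proj M x))\<^sup>2 \<le> (norm x)\<^sup>2" by simp
  then have "norm (proj M x) \<le> norm x" by (rule power2_le_imp_le) simp
  then show "norm (proj M x) \<le> norm x * 1" by simp
qed

lemma proj_selfadj: "cinner (proj M x) y = cinner x (proj M y)"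
proof -
  have "cinner (proj M x) y = cinner (proj M x) (proj M y) + cinner (proj M x) (y - proj M y)"
    by (simp add: cinner_diff_right)
  also have "cinner (proj M x) (y - proj M y) = 0" by (rule proj_orth'[OF proj_in])
  also have "cinner x (proj M y) = cinner (proj M x) (proj M y) + cinner (x - proj M x) (proj M y)"
    by (simp add: cinner_diff_left)
  moreover have "cinner (x - proj M x) (proj M y) = 0" by (rule proj_orth[OF proj_in])
  ultimately show ?thesis by simp
qed

end

lemma closed_csub_closure_range:
  "bounded_clinear S \<Longrightarrow> closed_csub (closure (range S))"
  by unfold_locales (auto intro: csubspace_closure csubspace_range)

subsection \<open>Riesz representation and adjoints\<close>

lemma riesz:
  fixes f :: "'a::chilbert_space \<Rightarrow> complex"
  assumes add: "\<And>x y. f (x + y) = f x + f y" and sc: "\<And>c x. f (scaleC c x) = c * f x"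
    and bd: "\<And>x. cmod (f x) \<le> K * norm x"
  shows "\<exists>z. \<forall>x. f x = cinner x z"
proof (cases "\<forall>x. f x = 0")
  case True then show ?thesis by (intro exI[of _ 0]) simp
next
  case False
  then obtain x0 where x0: "f x0 \<noteq> 0" by blast
  define N where "N = {x. f x = 0}"
  have f0: "f 0 = 0" using add[of 0 0] by simp
  have fdiff: "f (x - y) = f x - f y" for x y using add[of "x - y" y] by simp
  have subN: "csubspace N" unfolding csubspace_def N_def using f0 add sc by auto
  have blf: "bounded_linear f"
  proof
    fix x y :: 'a and r :: real
    show "f (x + y) = f x + f y" by (rule add)
    show "f (scaleR r x) = scaleR r (f x)" by (simp add: scaleR_scaleC sc scaleR_conv_of_real)
    show "\<exists>K. \<forall>x. norm (f x) \<le> norm x * K" using bd by (intro exI[of _ K]) (simp add: mult.commute)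
  qed
  have cloN: "closed N"
    unfolding closed_sequential_limits
  proof (intro allI impI)
    fix s l assume "(\<forall>n. s n \<in> N) \<and> s \<longlonglongrightarrow> l"
    then have s: "\<And>n. f (s n) = 0" "s \<longlonglongrightarrow> l" by (auto simp: N_def)
    have "(\<lambda>n. f (s n)) \<longlonglongrightarrow> f l" using bounded_linear.tendsto[OF blf s(2)] .
    then have "(\<lambda>n. 0) \<longlonglongrightarrow> f l" using s(1) by simp
    then have "f l = 0" using LIMSEQ_unique tendsto_const by blast
    then show "l \<in> N" by (simp add: N_def)
  qed
  interpret closed_csub N by unfold_locales (fact subN, fact cloN)
  define u where "u = x0 - proj N x0"
  have fu: "f u = f x0" using proj_in[of x0] by (simp add: u_def fdiff N_def)
  have uorth: "cinner m u = 0" if "m \<in> N" for m unfolding u_def by (rule proj_orth'[OF that])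
  have u0: "u \<noteq> 0" using fu x0 f0 by auto
  have uu: "cinner u u \<noteq> 0" using u0 by simp
  define z where "z = scaleC (cnj (f u / cinner u u)) u"
  show ?thesis
  proof (intro exI allI)
    fix x
    define w where "w = x - scaleC (f x / f u) u"
    have "f w = 0" using x0 fu by (simp add: w_def fdiff sc)
    then have "cinner w u = 0" using uorth by (simp add: N_def)
    then have "cinner x u = (f x / f u) * cinner u u"
      by (simp add: w_def cinner_diff_left cinner_scaleC_left)
    then show "f x = cinner x z"
      using uu x0 fu by (simp add: z_def cinner_scaleC_right field_simps)
  qed
qed

lemma adj_exists:
  fixes S :: "'a::chilbert_space \<Rightarrow> 'a"
  assumes S: "bounded_clinear S"
  shows "\<exists>S'. \<forall>x y. cinner (S x) y = cinner x (S' y)"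
proof -
  obtain K where K: "\<forall>x. norm (S x) \<le> norm x * K" using bcl_bound[OF S] by blast
  have "\<forall>y. \<exists>z. \<forall>x. cinner (S x) y = cinner x z"
  proof
    fix y
    show "\<exists>z. \<forall>x. cinner (S x) y = cinner x z"
    proof (rule riesz[where K="K * norm y"])
      fix x x' c
      show "cinner (S (x + x')) y = cinner (S x) y + cinner (S x') y"
        by (simp add: bcl_add[OF S] cinner_add_left)
      show "cinner (S (scaleC c x)) y = c * cinner (S x) y"
        by (simp add: bcl_scaleC[OF S] cinner_scaleC_left)
      have "cmod (cinner (S x) y) \<le> norm (S x) * norm y" by (rule cinner_Cauchy_Schwarz)
      also have "\<dots> \<le> norm x * K * norm y" using K by (simp add: mult_right_mono)
      finally show "cmod (cinner (S x) y) \<le> K * norm y * norm x" by (simp add: ac_simps)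
    qed
  qed
  then show ?thesis by metis
qed

lemma adj_unique:
  fixes S :: "'a::chilbert_space \<Rightarrow> 'a"
  assumes "\<And>x y. cinner (S x) y = cinner x (S' y)"
  shows "adj S = S'"
  unfolding adj_def
proof (rule the_equality)
  show "\<forall>x y. cinner (S x) y = cinner x (S' y)" using assms by blast
  fix S'' assume "\<forall>x y. cinner (S x) y = cinner x (S'' y)"
  then show "S'' = S'" using assms by (intro ext cinner_ext_right) metis
qed

lemma adj_prop:
  fixes S :: "'a::chilbert_space \<Rightarrow> 'a"
  assumes "bounded_clinear S"
  shows "cinner (S x) y = cinner x (adj S y)"
proof -
  obtain S' where "\<forall>x y. cinner (S x) y = cinner x (S' y)" using adj_exists[OF assms] by blast
  moreover then have "adj S = S'" by (intro adj_unique) blast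
  ultimately show ?thesis by simp
qed

lemma adj_prop':
  fixes S :: "'a::chilbert_space \<Rightarrow> 'a"
  assumes "bounded_clinear S"
  shows "cinner (adj S y) x = cinner y (S x)"
  using adj_prop[OF assms, of x y] by (metis cinner_commute)

lemma adjoint_bound:
  fixes S S' :: "'a::complex_inner \<Rightarrow> 'a"
  assumes adj: "\<And>x y. cinner (S x) y = cinner x (S' y)"
    and b: "\<And>x. norm (S x) \<le> c * norm x" and c: "c \<ge> 0"
  shows "norm (S' y) \<le> c * norm y"
proof (cases "S' y = 0")
  case True then show ?thesis using c by simp
next
  case False
  have "(norm (S' y))\<^sup>2 = Re (cinner (S' y) (S' y))" by (simp add: Re_cinner_self)
  also have "cinner (S' y) (S' y) = cnj (cinner (S (S' y)) y)"
    by (metis adj cinner_commute)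
  also have "Re (cnj (cinner (S (S' y)) y)) \<le> cmod (cinner (S (S' y)) y)"
    by (simp add: complex_Re_le_cmod)
  also have "\<dots> \<le> norm (S (S' y)) * norm y" by (rule cinner_Cauchy_Schwarz)
  also have "\<dots> \<le> c * norm (S' y) * norm y" using b by (simp add: mult_right_mono)
  finally have "norm (S' y) * norm (S' y) \<le> norm (S' y) * (c * norm y)"
    by (simp add: power2_eq_square ac_simps)
  then show ?thesis using False by simp
qed

lemma adj_bcl:
  fixes S :: "'a::chilbert_space \<Rightarrow> 'a"
  assumes S: "bounded_clinear S"
  shows "bounded_clinear (adj S)"
proof -
  obtain K where K: "K > 0" "\<forall>x. norm (S x) \<le> norm x * K" using bcl_bound[OF S] by blast
  show ?thesis
  proof (rule bcl_intro[where K=K])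
    fix y y' c
    show "adj S (y + y') = adj S y + adj S y'"
      by (rule cinner_ext_right) (simp add: adj_prop[OF S, symmetric] cinner_add_right)
    show "adj S (scaleC c y) = scaleC c (adj S y)"
      by (rule cinner_ext_right) (simp add: adj_prop[OF S, symmetric] cinner_scaleC_right)
    show "norm (adj S y) \<le> norm y * K"
      using adjoint_bound[of S "adj S" K y] adj_prop[OF S] K by (simp add: mult.commute)
  qed
qed

lemma adj_adj:
  fixes S :: "'a::chilbert_space \<Rightarrow> 'a"
  assumes "bounded_clinear S" shows "adj (adj S) = S"
  by (rule adj_unique) (simp add: adj_prop'[OF assms])

subsection \<open>Positive operators\<close>

lemma selfadj_of_real_form:
  fixes B :: "'a::complex_inner \<Rightarrow> 'a"
  assumes B: "bounded_clinear B" and r: "\<And>x. Im (cinner (B x) x) = 0"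
  shows "cinner (B x) y = cinner x (B y)"
proof -
  define f where "f x y = cinner (B x) y - cinner x (B y)" for x y
  have diag: "f z z = 0" for z
  proof -
    have "cinner z (B z) = cnj (cinner (B z) z)" by (rule cinner_commute)
    also have "\<dots> = cinner (B z) z" using r[of z] by (simp add: complex_eq_iff)
    finally show ?thesis by (simp add: f_def)
  qed
  have fadd1: "f (a + b) w = f a w + f b w" for a b w
    by (simp add: f_def bcl_add[OF B] cinner_add_left cinner_add_right)
  have fadd2: "f w (a + b) = f w a + f w b" for a b w
    by (simp add: f_def bcl_add[OF B] cinner_add_left cinner_add_right)
  have fsc1: "f (scaleC c a) w = c * f a w" for a c w
    by (simp add: f_def bcl_scaleC[OF B] cinner_scaleC_left cinner_scaleC_right algebra_simps)
  have fsc2: "f w (scaleC c a) = cnj c * f w a" for a c w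
    by (simp add: f_def bcl_scaleC[OF B] cinner_scaleC_left cinner_scaleC_right algebra_simps)
  have "f (x + y) (x + y) = f x x + f x y + f y x + f y y" by (simp add: fadd1 fadd2)
  then have s1: "f y x = - f x y" using diag[of "x + y"] diag[of x] diag[of y]
    by (simp add: eq_neg_iff_add_eq_0 add.commute)
  have "f (x + scaleC \<i> y) (x + scaleC \<i> y) = f x x + f x (scaleC \<i> y) + f (scaleC \<i> y) x + f (scaleC \<i> y) (scaleC \<i> y)"
    by (simp add: fadd1 fadd2)
  then have "f x (scaleC \<i> y) + f (scaleC \<i> y) x = 0"
    using diag[of "x + scaleC \<i> y"] diag[of x] diag[of "scaleC \<i> y"] by simp
  then have "- \<i> * f x y + \<i> * f y x = 0" by (simp add: fsc1 fsc2)
  then have "- (2 * \<i>) * f x y = 0" using s1 by (simp add: algebra_simps)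
  then have "f x y = 0" by simp
  then show ?thesis by (simp add: f_def)
qed

lemma pos_selfadj:
  fixes B :: "'a::chilbert_space \<Rightarrow> 'a"
  assumes "positive_op B" shows "cinner (B x) y = cinner x (B y)"
  using assms unfolding positive_op_def by (intro selfadj_of_real_form) auto

lemma pos_adj:
  fixes B :: "'a::chilbert_space \<Rightarrow> 'a"
  assumes "positive_op B" shows "adj B = B"
  by (rule adj_unique) (rule pos_selfadj[OF assms])


subsection \<open>Coefficients of the square-root series\<close>

definition sqc :: "nat \<Rightarrow> real" where
  "sqc k = ((1/2::real) gchoose k) * (-1) ^ k"

lemma sqc_0 [simp]: "sqc 0 = 1" by (simp add: sqc_def)

lemma gbinomial_Suc_rec: "(a gchoose Suc k) = (a gchoose k) * ((a - of_nat k) / of_nat (Suc k))"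
  for a :: real
proof -
  have "fact (Suc k) * (a gchoose Suc k) = (\<Prod>i = 0..<Suc k. a - of_nat i)"
    by (rule gbinomial_mult_fact)
  also have "\<dots> = (\<Prod>i = 0..<k. a - of_nat i) * (a - of_nat k)" by simp
  also have "(\<Prod>i = 0..<k. a - of_nat i) = fact k * (a gchoose k)"
    by (rule gbinomial_mult_fact[symmetric])
  finally have "fact (Suc k) * (a gchoose Suc k) = fact k * (a gchoose k) * (a - of_nat k)" .
  then have "fact k * (of_nat (Suc k) * (a gchoose Suc k)) = fact k * ((a gchoose k) * (a - of_nat k))"
    by (simp add: fact_Suc algebra_simps)
  then have "of_nat (Suc k) * (a gchoose Suc k) = (a gchoose k) * (a - of_nat k)"
    by (subst (asm) mult_left_cancel) auto
  then show ?thesis by (simp add: eq_divide_eq mult.commute del: of_nat_Suc)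
qed

lemma sqc_Suc: "sqc (Suc k) = sqc k * ((of_nat k - 1/2) / of_nat (Suc k))"
  by (simp add: sqc_def gbinomial_Suc_rec field_simps)

lemma sqc_nonpos: "k \<ge> 1 \<Longrightarrow> sqc k \<le> 0"
proof (induct k)
  case 0 then show ?case by simp
next
  case (Suc k)
  show ?case
  proof (cases "k = 0")
    case True then show ?thesis by (simp add: sqc_Suc)
  next
    case False
    then have "sqc k \<le> 0" using Suc by simp
    moreover have "(of_nat k - 1/2) / of_nat (Suc k) \<ge> (0::real)" using False by simp
    ultimately have "sqc k * ((of_nat k - 1/2) / of_nat (Suc k)) \<le> 0" by (rule mult_nonpos_nonneg)
    then show ?thesis by (simp only: sqc_Suc)
  qed
qed

lemma sqc_partial_nonneg: "(\<Sum>k\<le>m. sqc k) \<ge> 0"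
proof -
  have "(\<Sum>k\<le>m. sqc k) = (- 1) ^ m * ((1/2::real) - 1 gchoose m)"
    unfolding sqc_def by (rule gbinomial_sum_lower_neg)
  also have "((1/2::real) - 1 gchoose m) = (-1) ^ m * ((of_nat m - (1/2 - 1) - 1) gchoose m)"
    by (rule gbinomial_negated_upper)
  finally have eq: "(\<Sum>k\<le>m. sqc k) = ((of_nat m - 1/2 :: real) gchoose m)"
    by (simp add: power_mult_distrib[symmetric])
  have "((of_nat m - 1/2 :: real) gchoose m) = (\<Prod>i = 0..<m. (of_nat m - 1/2 - of_nat i) / of_nat (m - i))"
    by (rule gbinomial_altdef_of_nat)
  also have "\<dots> \<ge> 0"
  proof (rule prod_nonneg)
    fix i assume "i \<in> {0..<m}"
    then have "real i + 1 \<le> real m" by simp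
    then show "0 \<le> (real m - 1/2 - real i) / real (m - i)" by simp
  qed
  finally show ?thesis using eq by simp
qed

lemma sqc_abs_partial: "(\<Sum>k<m. \<bar>sqc (Suc k)\<bar>) \<le> 1"
proof -
  have "(\<Sum>k<m. \<bar>sqc (Suc k)\<bar>) = - (\<Sum>k<m. sqc (Suc k))"
    by (simp add: sum_negf[symmetric] sqc_nonpos abs_of_nonpos)
  also have "(\<Sum>k<m. sqc (Suc k)) = (\<Sum>k\<le>m. sqc k) - 1"
  proof -
    have "(\<Sum>k\<le>m. sqc k) = (\<Sum>k<Suc m. sqc k)" by (simp only: lessThan_Suc_atMost)
    also have "\<dots> = sqc 0 + (\<Sum>k<m. sqc (Suc k))" by (rule sum.lessThan_Suc_shift)
    finally show ?thesis by simp
  qed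
  finally show ?thesis using sqc_partial_nonneg[of m] by simp
qed

lemma summable_sqc_abs_Suc: "summable (\<lambda>k. \<bar>sqc (Suc k)\<bar>)"
  by (rule summableI_nonneg_bounded[where x=1]) (auto simp: sqc_abs_partial)

lemma suminf_sqc_abs_Suc: "(\<Sum>k. \<bar>sqc (Suc k)\<bar>) \<le> 1"
  by (rule suminf_le_const[OF summable_sqc_abs_Suc sqc_abs_partial])

lemma summable_sqc_abs: "summable (\<lambda>k. \<bar>sqc k\<bar>)"
  using summable_sqc_abs_Suc by (subst summable_Suc_iff[symmetric])

lemma suminf_sqc_abs: "(\<Sum>k. \<bar>sqc k\<bar>) \<le> 2"
  using suminf_split_head[OF summable_sqc_abs] suminf_sqc_abs_Suc by simp

lemma sqc_partial_abs_le: "(\<Sum>k<n. \<bar>sqc k\<bar>) \<le> 2"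
  using sum_le_suminf[OF summable_sqc_abs, of "{..<n}"] suminf_sqc_abs by simp

lemma sqc_conv: "(\<Sum>i\<le>n. sqc i * sqc (n - i)) = (if n = 0 then 1 else if n = 1 then -1 else 0)"
proof -
  have "(\<Sum>i\<le>n. sqc i * sqc (n - i)) = (\<Sum>i\<le>n. ((1/2::real) gchoose i) * ((1/2) gchoose (n - i))) * (-1)^n"
    unfolding sqc_def sum_distrib_right
    by (intro sum.cong refl) (auto simp: power_add[symmetric] algebra_simps)
  also have "(\<Sum>i\<le>n. ((1/2::real) gchoose i) * ((1/2) gchoose (n - i))) = (1/2 + 1/2) gchoose n"
    using gbinomial_Vandermonde[of "1/2::real" "1/2" n] by (simp add: atMost_atLeast0)
  also have "(1/2 + 1/2 :: real) gchoose n = of_nat (1 choose n)"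
    by (simp add: binomial_gbinomial)
  finally show ?thesis
    by (cases n; cases "n - 1") (auto simp: binomial_eq_0)
qed

subsection \<open>Double series rearrangement\<close>

lemma double_series_triangle:
  fixes G :: "nat \<Rightarrow> nat \<Rightarrow> 'a::banach"
  assumes bound: "\<And>i j. norm (G i j) \<le> \<alpha> i * \<beta> j"
    and a: "summable \<alpha>" and b: "summable \<beta>" and a0: "\<And>i. \<alpha> i \<ge> 0" and b0: "\<And>j. \<beta> j \<ge> 0"
    and L: "(\<lambda>n. \<Sum>i<n. \<Sum>j<n. G i j) \<longlonglongrightarrow> L"
  shows "(\<lambda>k. \<Sum>i\<le>k. G i (k - i)) sums L"
proof -
  let ?S1 = "\<lambda>n::nat. {..<n} \<times> {..<n}"
  let ?S2 = "\<lambda>n::nat. {(i,j). i + j < n}"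
  have S1_mono: "\<And>m n. m \<le> n \<Longrightarrow> ?S1 m \<subseteq> ?S1 n" by auto
  have S2_le_S1: "\<And>n. ?S2 n \<subseteq> ?S1 n" by auto
  have S1_le_S2: "\<And>n. ?S1 (n div 2) \<subseteq> ?S2 n" by auto
  have finite_S1: "\<And>n. finite (?S1 n)" by simp
  with S2_le_S1 have finite_S2: "\<And>n. finite (?S2 n)" by (rule finite_subset)
  let ?g = "\<lambda>(i,j). G i j"
  let ?f = "\<lambda>(i,j). \<alpha> i * \<beta> j"
  have f_nonneg: "\<And>x. 0 \<le> ?f x" using a0 b0 by auto
  then have norm_sum_f: "\<And>A. norm (sum ?f A) = sum ?f A"
    unfolding real_norm_def
    by (simp only: abs_of_nonneg sum_nonneg [rule_format])
  have eqS: "sum ?g (?S1 n) = (\<Sum>i<n. \<Sum>j<n. G i j)" for n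
    by (simp only: sum.cartesian_product split_def)
  have 1: "(\<lambda>n. sum ?g (?S1 n)) \<longlonglongrightarrow> L"
    unfolding eqS by (rule L)
  have "(\<lambda>n. (\<Sum>k<n. \<alpha> k) * (\<Sum>k<n. \<beta> k)) \<longlonglongrightarrow> (\<Sum>k. \<alpha> k) * (\<Sum>k. \<beta> k)"
    using a b by (intro tendsto_mult summable_LIMSEQ)
  then have "(\<lambda>n. sum ?f (?S1 n)) \<longlonglongrightarrow> (\<Sum>k. \<alpha> k) * (\<Sum>k. \<beta> k)"
    by (simp only: sum_product sum.Sigma [rule_format] finite_lessThan)
  then have "convergent (\<lambda>n. sum ?f (?S1 n))"
    by (rule convergentI)
  then have Cauchy: "Cauchy (\<lambda>n. sum ?f (?S1 n))"
    by (rule convergent_Cauchy)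
  have "Zfun (\<lambda>n. sum ?f (?S1 n - ?S2 n)) sequentially"
  proof (rule ZfunI, simp only: eventually_sequentially norm_sum_f)
    fix r :: real
    assume r: "0 < r"
    from CauchyD [OF Cauchy r] obtain N
      where "\<forall>m\<ge>N. \<forall>n\<ge>N. norm (sum ?f (?S1 m) - sum ?f (?S1 n)) < r" ..
    then have "\<And>m n. N \<le> n \<Longrightarrow> n \<le> m \<Longrightarrow> norm (sum ?f (?S1 m - ?S1 n)) < r"
      by (simp only: sum_diff finite_S1 S1_mono)
    then have N: "\<And>m n. N \<le> n \<Longrightarrow> n \<le> m \<Longrightarrow> sum ?f (?S1 m - ?S1 n) < r"
      by (simp only: norm_sum_f)
    show "\<exists>N. \<forall>n\<ge>N. sum ?f (?S1 n - ?S2 n) < r"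
    proof (intro exI allI impI)
      fix n
      assume "2 * N \<le> n"
      then have n: "N \<le> n div 2" by simp
      have "sum ?f (?S1 n - ?S2 n) \<le> sum ?f (?S1 n - ?S1 (n div 2))"
        by (intro sum_mono2 finite_Diff finite_S1 f_nonneg Diff_mono subset_refl S1_le_S2)
      also have "\<dots> < r"
        using n div_le_dividend by (rule N)
      finally show "sum ?f (?S1 n - ?S2 n) < r" .
    qed
  qed
  then have "Zfun (\<lambda>n. sum ?g (?S1 n - ?S2 n)) sequentially"
    apply (rule Zfun_le [rule_format])
    apply (simp only: norm_sum_f)
    apply (rule order_trans [OF norm_sum sum_mono])
    apply (auto simp add: bound)
    done
  then have 2: "(\<lambda>n. sum ?g (?S1 n) - sum ?g (?S2 n)) \<longlonglongrightarrow> 0"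
    unfolding tendsto_Zfun_iff diff_0_right
    by (simp only: sum_diff finite_S1 S2_le_S1)
  with 1 have "(\<lambda>n. sum ?g (?S2 n)) \<longlonglongrightarrow> L"
    by (rule Lim_transform2)
  then show ?thesis
    by (simp only: sums_def sum.triangle_reindex)
qed


instance chilbert_space \<subseteq> banach ..

lemma quad_aux:
  fixes a q c :: real
  assumes h: "\<And>r. 0 \<le> a - 2 * r * q + r\<^sup>2 * q * c" and c0: "c \<ge> 0" and q0: "q \<ge> 0"
  shows "q \<le> a * c"
proof (cases "c = 0")
  case True
  show ?thesis
  proof (rule ccontr)
    assume "\<not> q \<le> a * c"
    then have q: "q > 0" using True q0 by simp
    have "0 \<le> a - 2 * ((a + 1) / (2 * q)) * q" using h[of "(a + 1) / (2 * q)"] True by simp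
    then show False using q by (simp add: field_simps)
  qed
next
  case False
  then have c: "c > 0" using c0 by simp
  have "0 \<le> a - 2 * (1 / c) * q + (1 / c)\<^sup>2 * q * c" by (rule h)
  then have "0 \<le> a - q / c" using c by (simp add: power2_eq_square field_simps)
  then show ?thesis using c by (simp add: field_simps)
qed

lemma pos_bcl: "positive_op B \<Longrightarrow> bounded_clinear B"
  by (simp add: positive_op_def)

lemma pos_Re: "positive_op B \<Longrightarrow> 0 \<le> Re (cinner (B x) x)"
  by (simp add: positive_op_def)

lemma pos_Im: "positive_op B \<Longrightarrow> Im (cinner (B x) x) = 0"
  by (simp add: positive_op_def)

lemma pos_CS:
  fixes B :: "'a::chilbert_space \<Rightarrow> 'a"
  assumes B: "positive_op B"
  shows "(cmod (cinner (B x) y))\<^sup>2 \<le> Re (cinner (B x) x) * Re (cinner (B y) y)"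
proof -
  define b where "b = cinner (B x) y"
  define q where "q = (cmod b)\<^sup>2"
  have Bb: "bounded_clinear B" using B by (rule pos_bcl)
  have byx: "cinner (B y) x = cnj b"
    unfolding b_def using pos_selfadj[OF B, of y x] cinner_commute[of y "B x"] by simp
  have bb: "cnj b * b = complex_of_real q" by (simp add: q_def complex_mult_cnj cmod_power2 mult.commute)
  have "0 \<le> Re (cinner (B x) x) - 2 * r * q + r\<^sup>2 * q * Re (cinner (B y) y)" for r
  proof -
    define t where "t = complex_of_real r * b"
    have "cinner (B (x - scaleC t y)) (x - scaleC t y)
       = cinner (B x) x - cnj t * b - t * cnj b + t * cnj t * cinner (B y) y"
      by (simp add: bcl_diff[OF Bb] bcl_scaleC[OF Bb] cinner_diff_left cinner_diff_right
          cinner_scaleC_left cinner_scaleC_right byx b_def algebra_simps)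
    also have "cnj t * b = complex_of_real (r * q)" by (simp add: t_def bb[symmetric] mult.commute)
    also have "t * cnj b = complex_of_real (r * q)" by (simp add: t_def bb[symmetric] mult.commute)
    also have "t * cnj t = complex_of_real (r\<^sup>2 * q)"
      by (simp add: t_def power2_eq_square bb[symmetric] mult.commute mult.left_commute)
    finally have "Re (cinner (B (x - scaleC t y)) (x - scaleC t y))
        = Re (cinner (B x) x) - 2 * r * q + r\<^sup>2 * q * Re (cinner (B y) y)"
      by simp
    then show ?thesis using pos_Re[OF B, of "x - scaleC t y"] by simp
  qed
  then have "q \<le> Re (cinner (B x) x) * Re (cinner (B y) y)"
    by (rule quad_aux) (auto simp: q_def pos_Re[OF B])
  then show ?thesis by (simp add: q_def b_def)
qed

lemma pos_zero:
  fixes B :: "'a::chilbert_space \<Rightarrow> 'a"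
  assumes B: "positive_op B" and z: "Re (cinner (B y) y) = 0"
  shows "B y = 0"
proof -
  have "(cmod (cinner (B (B y)) y))\<^sup>2 \<le> 0"
    using pos_CS[OF B, of "B y" y] z by simp
  then have "cinner (B (B y)) y = 0" by simp
  then have "cinner (B y) (B y) = 0" using pos_selfadj[OF B, of "B y" y] by simp
  then show ?thesis by simp
qed

lemma pos_norm_le:
  fixes B :: "'a::chilbert_space \<Rightarrow> 'a"
  assumes B: "positive_op B" and le: "\<And>x. Re (cinner (B x) x) \<le> (norm x)\<^sup>2"
  shows "norm (B x) \<le> norm x"
proof (cases "B x = 0")
  case True then show ?thesis by simp
next
  case False
  have "(cmod (cinner (B x) (B x)))\<^sup>2 \<le> Re (cinner (B x) x) * Re (cinner (B (B x)) (B x))"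
    by (rule pos_CS[OF B])
  also have "\<dots> \<le> (norm x)\<^sup>2 * (norm (B x))\<^sup>2"
    using le pos_Re[OF B] by (intro mult_mono) auto
  also have "cmod (cinner (B x) (B x)) = (norm (B x))\<^sup>2" by (simp add: cinner_self del: of_real_power)
  finally have H: "((norm (B x))\<^sup>2)\<^sup>2 \<le> (norm x)\<^sup>2 * (norm (B x))\<^sup>2" .
  have "(norm (B x))\<^sup>2 * (norm (B x))\<^sup>2 \<le> (norm x)\<^sup>2 * (norm (B x))\<^sup>2"
    using H by (simp only: power2_eq_square[of "(norm (B x))\<^sup>2"])
  moreover have "(norm (B x))\<^sup>2 > 0" using False by simp
  ultimately have "(norm (B x))\<^sup>2 \<le> (norm x)\<^sup>2" by (simp only: mult_le_cancel_right_pos)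
  then show ?thesis by (rule power2_le_imp_le) simp
qed

subsection \<open>Construction of the square root\<close>

locale sqrt_setup =
  fixes A :: "'a::chilbert_space \<Rightarrow> 'a" and s :: real
  assumes posA: "positive_op A" and s: "s > 0" and bnd: "\<And>x. norm (A x) \<le> s * norm x"
begin

definition X :: "'a \<Rightarrow> 'a" where "X x = x - scaleC (complex_of_real (1/s)) (A x)"

lemma Abcl: "bounded_clinear A" using posA by (rule pos_bcl)

lemma X_bcl: "bounded_clinear X"
proof -
  have "bounded_clinear (\<lambda>x. x - scaleC (complex_of_real (1/s)) (A x))"
    by (intro bcl_diff_op bcl_id bcl_scaleC_op Abcl)
  then show ?thesis by (simp add: X_def[abs_def])
qed

lemma X_form: "cinner (X x) x = cinner x x - complex_of_real (1/s) * cinner (A x) x"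
  by (simp add: X_def cinner_diff_left cinner_scaleC_left)

lemma X_pos: "positive_op X"
  unfolding positive_op_def
proof (intro conjI allI X_bcl)
  fix x
  show "Im (cinner (X x) x) = 0" by (simp add: X_form pos_Im[OF posA])
  have "Re (cinner (A x) x) \<le> cmod (cinner (A x) x)" by (rule complex_Re_le_cmod)
  also have "\<dots> \<le> norm (A x) * norm x" by (rule cinner_Cauchy_Schwarz)
  also have "\<dots> \<le> s * norm x * norm x" using bnd by (simp add: mult_right_mono)
  finally have "Re (cinner (A x) x) / s \<le> (norm x)\<^sup>2" using s by (simp add: divide_le_eq power2_eq_square ac_simps)
  then show "0 \<le> Re (cinner (X x) x)" by (simp add: X_form Re_cinner_self)
qed

lemma X_le: "Re (cinner (X x) x) \<le> (norm x)\<^sup>2"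
  using pos_Re[OF posA, of x] s by (simp add: X_form Re_cinner_self)

lemma X_norm: "norm (X x) \<le> norm x"
  by (rule pos_norm_le[OF X_pos X_le])

lemma Xpow_norm: "norm ((X ^^ k) x) \<le> norm x"
  by (induct k) (auto intro: order_trans[OF X_norm])

lemma Xpow_bcl: "bounded_clinear (X ^^ k)"
  by (rule bcl_funpow[OF X_bcl])

lemma Xpow_selfadj: "cinner ((X ^^ k) x) y = cinner x ((X ^^ k) y)"
proof (induct k arbitrary: x y)
  case 0 then show ?case by simp
next
  case (Suc k)
  have "cinner ((X ^^ Suc k) x) y = cinner (X ((X ^^ k) x)) y" by simp
  also have "\<dots> = cinner ((X ^^ k) x) (X y)" by (rule pos_selfadj[OF X_pos])
  also have "\<dots> = cinner x ((X ^^ k) (X y))" by (rule Suc)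
  also have "(X ^^ k) (X y) = (X ^^ Suc k) y" by (simp add: funpow_Suc_right del: funpow.simps)
  finally show ?case .
qed

lemma Xpow_Im: "Im (cinner ((X ^^ k) x) x) = 0"
proof -
  have "cinner ((X ^^ k) x) x = cnj (cinner ((X ^^ k) x) x)"
    by (metis Xpow_selfadj cinner_commute)
  then have "Im (cinner ((X ^^ k) x) x) = Im (cnj (cinner ((X ^^ k) x) x))" by (rule arg_cong)
  then show ?thesis by simp
qed

lemma Xpow_Re_bound: "\<bar>Re (cinner ((X ^^ k) x) x)\<bar> \<le> (norm x)\<^sup>2"
proof -
  have "\<bar>Re (cinner ((X ^^ k) x) x)\<bar> \<le> cmod (cinner ((X ^^ k) x) x)" by (rule abs_Re_le_cmod)
  also have "\<dots> \<le> norm ((X ^^ k) x) * norm x" by (rule cinner_Cauchy_Schwarz)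
  also have "\<dots> \<le> norm x * norm x" by (intro mult_right_mono Xpow_norm) auto
  finally show ?thesis by (simp add: power2_eq_square)
qed

definition Y :: "'a \<Rightarrow> 'a" where "Y x = (\<Sum>k. scaleR (sqc k) ((X ^^ k) x))"

lemma Y_term_bound: "norm (scaleR (sqc k) ((X ^^ k) x)) \<le> \<bar>sqc k\<bar> * norm x"
proof -
  have "norm ((X ^^ k) x) \<le> norm x" by (rule Xpow_norm)
  then have "\<bar>sqc k\<bar> * norm ((X ^^ k) x) \<le> \<bar>sqc k\<bar> * norm x" by (rule mult_left_mono) simp
  then show ?thesis by simp
qed

lemma Y_norm_summable: "summable (\<lambda>k. norm (scaleR (sqc k) ((X ^^ k) x)))"
proof (rule summable_comparison_test'[where g="\<lambda>k. \<bar>sqc k\<bar> * norm x" and N=0])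
  show "summable (\<lambda>k. \<bar>sqc k\<bar> * norm x)" by (intro summable_mult2 summable_sqc_abs)
  fix n show "norm (norm (scaleR (sqc n) ((X ^^ n) x))) \<le> \<bar>sqc n\<bar> * norm x"
    using Y_term_bound[of n x] by simp
qed

lemma Y_summable: "summable (\<lambda>k. scaleR (sqc k) ((X ^^ k) x))"
  by (rule summable_norm_cancel[OF Y_norm_summable])

lemma Y_norm: "norm (Y x) \<le> 2 * norm x"
proof -
  have "norm (Y x) \<le> (\<Sum>k. norm (scaleR (sqc k) ((X ^^ k) x)))"
    unfolding Y_def by (rule summable_norm[OF Y_norm_summable])
  also have "\<dots> \<le> (\<Sum>k. \<bar>sqc k\<bar> * norm x)"
    by (intro suminf_le Y_term_bound Y_norm_summable summable_mult2 summable_sqc_abs)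
  also have "\<dots> = (\<Sum>k. \<bar>sqc k\<bar>) * norm x" by (intro suminf_mult2[symmetric] summable_sqc_abs)
  also have "\<dots> \<le> 2 * norm x" by (intro mult_right_mono suminf_sqc_abs) auto
  finally show ?thesis .
qed

lemma scaleC_scaleR_comm: "scaleC c (scaleR r v) = scaleR r (scaleC c (v::'a))"
  by (simp add: scaleR_scaleC scaleC_scaleC mult.commute)

lemma Y_bcl: "bounded_clinear Y"
proof (rule bcl_intro[where K=2])
  fix x y
  show "Y (x + y) = Y x + Y y"
    unfolding Y_def
    by (simp add: bcl_add[OF Xpow_bcl] scaleR_add_right suminf_add[OF Y_summable Y_summable])
  fix c
  have "scaleC c (Y x) = (\<Sum>k. scaleC c (scaleR (sqc k) ((X ^^ k) x)))"
    unfolding Y_def by (rule bounded_linear.suminf[OF bounded_linear_scaleC_right Y_summable])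
  also have "\<dots> = Y (scaleC c x)"
    by (simp add: Y_def bcl_scaleC[OF Xpow_bcl] scaleC_scaleR_comm)
  finally show "Y (scaleC c x) = scaleC c (Y x)" by simp
next
  fix x show "norm (Y x) \<le> norm x * 2" using Y_norm by (simp add: mult.commute)
qed

lemma Y_comm:
  assumes C: "bounded_clinear C" and CX: "\<And>x. C (X x) = X (C x)"
  shows "C (Y x) = Y (C x)"
proof -
  have CXk: "C ((X ^^ k) x) = (X ^^ k) (C x)" for k x
    by (induct k) (simp_all add: CX)
  have "C (Y x) = (\<Sum>k. C (scaleR (sqc k) ((X ^^ k) x)))"
    unfolding Y_def by (rule bcl_suminf[OF C Y_summable])
  also have "\<dots> = Y (C x)"
    unfolding Y_def using bclD[OF C]
    by (simp add: CXk linear_scale bounded_linear.linear)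
  finally show ?thesis .
qed

lemma blin_cinner_left: "bounded_linear (\<lambda>v. cinner v (y::'a))"
  by (rule bounded_bilinear.bounded_linear_left[OF bounded_bilinear_cinner])

lemma blin_cinner_right: "bounded_linear (\<lambda>v. cinner (y::'a) v)"
  by (rule bounded_bilinear.bounded_linear_right[OF bounded_bilinear_cinner])

lemma cinner_scaleR_left: "cinner (scaleR r v) (w::'a) = complex_of_real r * cinner v w"
  by (simp add: scaleR_scaleC cinner_scaleC_left)

lemma cinner_scaleR_right: "cinner (w::'a) (scaleR r v) = complex_of_real r * cinner w v"
  by (simp add: scaleR_scaleC cinner_scaleC_right)

lemma Y_cinner: "cinner (Y x) y = (\<Sum>k. complex_of_real (sqc k) * cinner ((X ^^ k) x) y)"
proof -
  have "cinner (Y x) y = (\<Sum>k. cinner (scaleR (sqc k) ((X ^^ k) x)) y)"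
    unfolding Y_def by (rule bounded_linear.suminf[OF blin_cinner_left Y_summable])
  then show ?thesis by (simp add: cinner_scaleR_left)
qed

lemma Y_cinner_summable: "summable (\<lambda>k. complex_of_real (sqc k) * cinner ((X ^^ k) x) y)"
proof -
  have "summable (\<lambda>k. cinner (scaleR (sqc k) ((X ^^ k) x)) y)"
    by (rule bounded_linear.summable[OF blin_cinner_left Y_summable])
  then show ?thesis by (simp add: cinner_scaleR_left)
qed

lemma Y_selfadj: "cinner (Y x) y = cinner x (Y y)"
proof -
  have "cinner x (Y y) = (\<Sum>k. cinner x (scaleR (sqc k) ((X ^^ k) y)))"
    unfolding Y_def by (rule bounded_linear.suminf[OF blin_cinner_right Y_summable])
  also have "\<dots> = (\<Sum>k. complex_of_real (sqc k) * cinner ((X ^^ k) x) y)"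
    by (simp add: cinner_scaleR_right Xpow_selfadj)
  finally show ?thesis by (simp add: Y_cinner)
qed

lemma Y_pos: "positive_op Y"
  unfolding positive_op_def
proof (intro conjI allI Y_bcl)
  fix x
  define h where "h k = complex_of_real (sqc k) * cinner ((X ^^ k) x) x" for k
  have hs: "summable h" unfolding h_def by (rule Y_cinner_summable)
  have Yh: "cinner (Y x) x = suminf h" unfolding h_def by (rule Y_cinner)
  have "Im (suminf h) = (\<Sum>k. Im (h k))"
    by (rule bounded_linear.suminf[OF bounded_linear_Im hs])
  also have "\<dots> = 0" by (simp add: h_def Xpow_Im)
  finally show "Im (cinner (Y x) x) = 0" by (simp add: Yh)
  have rs: "summable (\<lambda>k. Re (h k))" by (rule bounded_linear.summable[OF bounded_linear_Re hs])
  have "Re (suminf h) = (\<Sum>k. Re (h k))"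
    by (rule bounded_linear.suminf[OF bounded_linear_Re hs])
  also have "\<dots> = (\<Sum>k. Re (h (Suc k))) + Re (h 0)"
    using suminf_split_head[OF rs] by simp
  also have "Re (h 0) = (norm x)\<^sup>2" by (simp add: h_def Re_cinner_self)
  also have "(\<Sum>k. Re (h (Suc k))) \<ge> (\<Sum>k. - (\<bar>sqc (Suc k)\<bar> * (norm x)\<^sup>2))"
  proof (rule suminf_le)
    fix k
    have "\<bar>Re (h (Suc k))\<bar> \<le> \<bar>sqc (Suc k)\<bar> * (norm x)\<^sup>2"
      using Xpow_Re_bound[of "Suc k" x] by (simp add: h_def abs_mult mult_left_mono)
    then show "- (\<bar>sqc (Suc k)\<bar> * (norm x)\<^sup>2) \<le> Re (h (Suc k))" by linarith
  next
    show "summable (\<lambda>k. - (\<bar>sqc (Suc k)\<bar> * (norm x)\<^sup>2))"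
      by (intro summable_minus summable_mult2 summable_sqc_abs_Suc)
    show "summable (\<lambda>k. Re (h (Suc k)))" using rs by (subst summable_Suc_iff)
  qed
  moreover have "(\<Sum>k. - (\<bar>sqc (Suc k)\<bar> * (norm x)\<^sup>2)) = - ((\<Sum>k. \<bar>sqc (Suc k)\<bar>) * (norm x)\<^sup>2)"
    by (simp add: suminf_minus summable_mult2 summable_sqc_abs_Suc suminf_mult2)
  moreover have "(\<Sum>k. \<bar>sqc (Suc k)\<bar>) * (norm x)\<^sup>2 \<le> 1 * (norm x)\<^sup>2"
    by (intro mult_right_mono suminf_sqc_abs_Suc) auto
  ultimately show "0 \<le> Re (cinner (Y x) x)" by (simp add: Yh)
qed

end


context sqrt_setup
begin

definition Pn :: "nat \<Rightarrow> 'a \<Rightarrow> 'a" where "Pn n z = (\<Sum>i<n. scaleR (sqc i) ((X ^^ i) z))"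

lemma Pn_norm: "norm (Pn n z) \<le> 2 * norm z"
proof -
  have "norm (Pn n z) \<le> (\<Sum>i<n. norm (scaleR (sqc i) ((X ^^ i) z)))"
    unfolding Pn_def by (rule norm_sum)
  also have "\<dots> \<le> (\<Sum>i<n. \<bar>sqc i\<bar> * norm z)" by (intro sum_mono Y_term_bound)
  also have "\<dots> = (\<Sum>i<n. \<bar>sqc i\<bar>) * norm z" by (simp add: sum_distrib_right)
  also have "\<dots> \<le> 2 * norm z" by (intro mult_right_mono sqc_partial_abs_le) auto
  finally show ?thesis .
qed

lemma Pn_lim: "(\<lambda>n. Pn n z) \<longlonglongrightarrow> Y z"
  unfolding Pn_def Y_def by (rule summable_LIMSEQ[OF Y_summable])

lemma Pn_diff: "Pn n z - Pn n w = Pn n (z - w)"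
  unfolding Pn_def by (simp add: bcl_diff[OF Xpow_bcl] scaleR_diff_right sum_subtractf)

lemma Pn_double: "Pn n (Pn n x) = (\<Sum>i<n. \<Sum>j<n. scaleR (sqc i * sqc j) ((X ^^ (i + j)) x))"
proof -
  have "Pn n (Pn n x) = (\<Sum>i<n. scaleR (sqc i) ((X ^^ i) (\<Sum>j<n. scaleR (sqc j) ((X ^^ j) x))))"
    by (simp add: Pn_def)
  also have "\<dots> = (\<Sum>i<n. \<Sum>j<n. scaleR (sqc i * sqc j) ((X ^^ (i + j)) x))"
  proof (rule sum.cong[OF refl])
    fix i
    have "(X ^^ i) (\<Sum>j<n. scaleR (sqc j) ((X ^^ j) x)) = (\<Sum>j<n. (X ^^ i) (scaleR (sqc j) ((X ^^ j) x)))"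
      by (rule bcl_sum[OF Xpow_bcl])
    also have "\<dots> = (\<Sum>j<n. scaleR (sqc j) ((X ^^ (i + j)) x))"
      using bclD[OF Xpow_bcl[of i]] by (simp add: linear_scale bounded_linear.linear funpow_add)
    finally show "scaleR (sqc i) ((X ^^ i) (\<Sum>j<n. scaleR (sqc j) ((X ^^ j) x)))
        = (\<Sum>j<n. scaleR (sqc i * sqc j) ((X ^^ (i + j)) x))"
      by (simp add: scaleR_sum_right)
  qed
  finally show ?thesis .
qed

lemma PP_lim: "(\<lambda>n. Pn n (Pn n x)) \<longlonglongrightarrow> Y (Y x)"
proof -
  have a: "(\<lambda>n. Pn n (Pn n x - Y x)) \<longlonglongrightarrow> 0"
  proof (rule Lim_null_comparison)
    show "\<forall>\<^sub>F n in sequentially. norm (Pn n (Pn n x - Y x)) \<le> 2 * norm (Pn n x - Y x)"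
      by (intro always_eventually allI Pn_norm)
    have "(\<lambda>n. Pn n x - Y x) \<longlonglongrightarrow> 0" using Pn_lim by (rule LIM_zero)
    then show "(\<lambda>n. 2 * norm (Pn n x - Y x)) \<longlonglongrightarrow> 0"
      by (intro tendsto_mult_right_zero tendsto_norm_zero)
  qed
  have b: "(\<lambda>n. Pn n (Y x) - Y (Y x)) \<longlonglongrightarrow> 0" using Pn_lim by (rule LIM_zero)
  have "(\<lambda>n. Pn n (Pn n x - Y x) + (Pn n (Y x) - Y (Y x))) \<longlonglongrightarrow> 0"
    using tendsto_add[OF a b] by simp
  moreover have "Pn n (Pn n x - Y x) + (Pn n (Y x) - Y (Y x)) = Pn n (Pn n x) - Y (Y x)" for n
    using Pn_diff[of n "Pn n x" "Y x", symmetric] by simp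
  ultimately have "(\<lambda>n. Pn n (Pn n x) - Y (Y x)) \<longlonglongrightarrow> 0" by simp
  then show ?thesis by (rule LIM_zero_cancel)
qed

lemma Y_sq: "Y (Y x) = x - X x"
proof -
  define G where "G i j = scaleR (sqc i * sqc j) ((X ^^ (i + j)) x)" for i j
  have bound: "norm (G i j) \<le> \<bar>sqc i\<bar> * (\<bar>sqc j\<bar> * norm x)" for i j
  proof -
    have "norm (G i j) = \<bar>sqc i\<bar> * \<bar>sqc j\<bar> * norm ((X ^^ (i + j)) x)"
      by (simp add: G_def abs_mult)
    also have "\<dots> \<le> \<bar>sqc i\<bar> * \<bar>sqc j\<bar> * norm x" by (intro mult_left_mono Xpow_norm) auto
    finally show ?thesis by (simp add: ac_simps)
  qed
  have L: "(\<lambda>n. \<Sum>i<n. \<Sum>j<n. G i j) \<longlonglongrightarrow> Y (Y x)"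
    using PP_lim unfolding Pn_double G_def .
  have s1: "(\<lambda>k. \<Sum>i\<le>k. G i (k - i)) sums Y (Y x)"
    by (rule double_series_triangle[OF bound summable_sqc_abs
          summable_mult2[OF summable_sqc_abs] _ _ L]) auto
  have tri: "(\<Sum>i\<le>k. G i (k - i)) = scaleR (if k = 0 then 1 else if k = 1 then -1 else 0) ((X ^^ k) x)" for k
  proof -
    have "(\<Sum>i\<le>k. G i (k - i)) = (\<Sum>i\<le>k. scaleR (sqc i * sqc (k - i)) ((X ^^ k) x))"
      by (intro sum.cong refl) (simp add: G_def)
    also have "\<dots> = scaleR (\<Sum>i\<le>k. sqc i * sqc (k - i)) ((X ^^ k) x)"
      by (simp add: scaleR_sum_left)
    finally show ?thesis by (simp add: sqc_conv)
  qed
  define f where "f k = scaleR (if k = 0 then 1 else if k = 1 then -1 else 0) ((X ^^ k) x)" for k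
  have s2: "f sums (\<Sum>k\<in>{0,1}. f k)"
    by (rule sums_finite) (auto simp: f_def)
  have "(\<Sum>k\<in>{0,1}. f k) = x - X x" by (simp add: f_def)
  with s1 s2 show ?thesis unfolding tri f_def[symmetric] by (metis sums_unique2)
qed

definition Bs :: "'a \<Rightarrow> 'a" where "Bs x = scaleC (complex_of_real (sqrt s)) (Y x)"

lemma Bs_bcl: "bounded_clinear Bs"
  unfolding Bs_def[abs_def] by (intro bcl_scaleC_op Y_bcl)

lemma Bs_pos: "positive_op Bs"
  unfolding positive_op_def
proof (intro conjI allI Bs_bcl)
  fix x
  have "cinner (Bs x) x = complex_of_real (sqrt s) * cinner (Y x) x"
    by (simp add: Bs_def cinner_scaleC_left)
  then show "Im (cinner (Bs x) x) = 0" "0 \<le> Re (cinner (Bs x) x)"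
    using pos_Im[OF Y_pos, of x] pos_Re[OF Y_pos, of x] s by auto
qed

lemma Bs_sq: "Bs (Bs x) = A x"
proof -
  have "Bs (Bs x) = scaleC (complex_of_real (sqrt s) * complex_of_real (sqrt s)) (Y (Y x))"
    by (simp add: Bs_def bcl_scaleC[OF Y_bcl] scaleC_scaleC)
  also have "complex_of_real (sqrt s) * complex_of_real (sqrt s) = complex_of_real s"
    using s by (simp flip: of_real_mult)
  also have "Y (Y x) = scaleC (complex_of_real (1/s)) (A x)" by (simp add: Y_sq X_def)
  also have "scaleC (complex_of_real s) (scaleC (complex_of_real (1/s)) (A x)) = A x"
    using s by (simp add: scaleC_scaleC scaleC_one flip: of_real_mult)
  finally show ?thesis .
qed

lemma sqrt_unique:
  assumes C: "positive_op C" and CC: "\<And>x. C (C x) = A x"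
  shows "C = Bs"
proof -
  have Cb: "bounded_clinear C" using C by (rule pos_bcl)
  have CA: "C (A x) = A (C x)" for x using CC by metis
  have CX: "C (X x) = X (C x)" for x
    by (simp add: X_def bcl_diff[OF Cb] bcl_scaleC[OF Cb] CA)
  have CB: "C (Bs x) = Bs (C x)" for x
    by (simp add: Bs_def bcl_scaleC[OF Cb] Y_comm[OF Cb CX])
  show ?thesis
  proof (rule ext)
    fix x
    define y where "y = Bs x - C x"
    have "Bs y + C y = 0"
      by (simp add: y_def bcl_diff[OF Bs_bcl] bcl_diff[OF Cb] Bs_sq CC CB)
    then have "Re (cinner (Bs y) y) + Re (cinner (C y) y) = 0"
      by (metis cinner_add_left cinner_zero_left plus_complex.simps(1) zero_complex.simps(1))
    moreover have "Re (cinner (Bs y) y) \<ge> 0" "Re (cinner (C y) y) \<ge> 0"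
      using pos_Re[OF Bs_pos] pos_Re[OF C] by auto
    ultimately have "Re (cinner (Bs y) y) = 0" "Re (cinner (C y) y) = 0" by linarith+
    then have "Bs y = 0" "C y = 0" using pos_zero[OF Bs_pos] pos_zero[OF C] by auto
    then have "cinner y y = 0"
      by (simp add: y_def cinner_diff_left pos_selfadj[OF Bs_pos, of x] pos_selfadj[OF C, of x])
    then show "C x = Bs x" by (simp add: y_def)
  qed
qed

end

lemma sqrt_op_spec:
  fixes A :: "'a::chilbert_space \<Rightarrow> 'a"
  assumes A: "positive_op A"
  shows "positive_op (sqrt_op A) \<and> (\<forall>x. sqrt_op A (sqrt_op A x) = A x)"
proof -
  obtain K where K: "K > 0" "\<forall>x. norm (A x) \<le> norm x * K" using bcl_bound[OF pos_bcl[OF A]] by blast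
  interpret sqrt_setup A K by unfold_locales (use A K in \<open>auto simp: mult.commute\<close>)
  have "sqrt_op A = Bs"
    unfolding sqrt_op_def
  proof (rule the_equality)
    show "positive_op Bs \<and> Bs \<circ> Bs = A" using Bs_pos Bs_sq by (auto simp: o_def)
    fix C assume "positive_op C \<and> C \<circ> C = A"
    then show "C = Bs" by (intro sqrt_unique) (auto simp: o_def dest: fun_cong)
  qed
  then show ?thesis using Bs_pos Bs_sq by simp
qed


subsection \<open>Closed graph theorem\<close>

lemma baire_some_interior:
  fixes E :: "nat \<Rightarrow> 'a::{real_normed_vector, complete_space} set"
  assumes "\<And>x. \<exists>n. x \<in> E n"
  shows "\<exists>n. interior (closure (E n)) \<noteq> {}"
proof (rule ccontr)
  assume "\<not> ?thesis"
  then have h: "\<And>n. interior (closure (E n)) = {}" by blast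
  have "euclidean interior_of \<Union>(range (\<lambda>n. closure (E n))) = {}"
  proof (rule Baire_category_alt)
    show "completely_metrizable_space (euclidean :: 'a topology) \<or> locally_compact_space (euclidean :: 'a topology) \<and> regular_space (euclidean :: 'a topology)"
      using completely_metrizable_space_euclidean by blast
    show "countable (range (\<lambda>n. closure (E n)))" by simp
    fix T assume "T \<in> range (\<lambda>n. closure (E n))"
    then show "closedin euclidean T \<and> euclidean interior_of T = {}"
      using h by (auto simp: closed_closedin[symmetric])
  qed
  moreover have "\<Union>(range (\<lambda>n. closure (E n))) = UNIV"
    using assms closure_subset by blast
  ultimately show False by simp
qed

lemma closed_graph_bounded:
  fixes R :: "'a::banach \<Rightarrow> 'b::banach"
  assumes lin: "linear R"
    and cg: "\<And>s x y. s \<longlonglongrightarrow> x \<Longrightarrow> (\<lambda>n. R (s n)) \<longlonglongrightarrow> y \<Longrightarrow> R x = y"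
  shows "bounded_linear R"
proof -
  define E where "E n = {x. norm (R x) \<le> real n}" for n
  have "\<exists>n. x \<in> E n" for x
    using real_arch_simple[of "norm (R x)"] by (auto simp: E_def)
  then obtain n where "interior (closure (E n)) \<noteq> {}" using baire_some_interior by blast
  then obtain x0 where "x0 \<in> interior (closure (E n))" by blast
  then obtain r where r: "r > 0" "ball x0 r \<subseteq> closure (E n)"
    using mem_interior by blast
  have R0: "R 0 = 0" using lin by (rule linear_0)
  have Rdiff: "R (a - b) = R a - R b" for a b using lin by (rule linear_diff)
  have Rscale: "R (scaleR c a) = scaleR c (R a)" for c a using lin by (rule linear_scale)
  have approx: "\<exists>w. norm (z - w) < e \<and> norm (R w) \<le> 2 * n" if z: "norm z < r" and e: "e > 0" for z e
  proof -
    have "x0 + z \<in> closure (E n)" using r z by (auto simp: dist_norm)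
    then obtain u where u: "u \<in> E n" "dist u (x0 + z) < e / 2"
      using e by (metis closure_approachable half_gt_zero)
    have "x0 \<in> closure (E n)" using r by auto
    then obtain v where v: "v \<in> E n" "dist v x0 < e / 2"
      using e by (metis closure_approachable half_gt_zero)
    have "z - (u - v) = - ((u - (x0 + z)) - (v - x0))" by (simp add: algebra_simps)
    then have "norm (z - (u - v)) = norm ((u - (x0 + z)) - (v - x0))" by (simp only: norm_minus_cancel)
    also have "\<dots> \<le> norm (u - (x0 + z)) + norm (v - x0)" by (rule norm_triangle_ineq4)
    also have "\<dots> < e" using u v by (simp add: dist_norm)
    finally have 1: "norm (z - (u - v)) < e" .
    have "norm (R (u - v)) \<le> norm (R u) + norm (R v)" by (simp add: Rdiff norm_triangle_ineq4)
    also have "\<dots> \<le> 2 * n" using u v by (simp add: E_def)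
    finally show ?thesis using 1 by blast
  qed
  define C where "C = 4 * real n / r"
  have C0: "C \<ge> 0" using r by (simp add: C_def)
  have step: "\<exists>w. norm (z - w) \<le> norm z / 2 \<and> norm (R w) \<le> C * norm z" for z
  proof (cases "z = 0")
    case True then show ?thesis by (intro exI[of _ 0]) (simp add: R0)
  next
    case False
    then have nz: "norm z > 0" by simp
    define t where "t = r / (2 * norm z)"
    have t: "t > 0" using r nz by (simp add: t_def)
    have "norm (scaleR t z) < r" using r nz by (simp add: t_def)
    then obtain w' where w': "norm (scaleR t z - w') < t * (norm z / 2)" "norm (R w') \<le> 2 * n"
      using approx[of "scaleR t z" "t * (norm z / 2)"] t nz by auto
    define w where "w = scaleR (1/t) w'"
    have "z - w = scaleR (1/t) (scaleR t z - w')" using t by (simp add: w_def algebra_simps)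
    then have "norm (z - w) = norm (scaleR t z - w') / t" using t by simp
    also have "\<dots> \<le> norm z / 2" using w'(1) t by (simp add: divide_le_eq mult.commute)
    finally have 1: "norm (z - w) \<le> norm z / 2" .
    have "norm (R w) = norm (R w') / t" using t by (simp add: w_def Rscale)
    also have "\<dots> \<le> 2 * n / t" using w'(2) t by (simp add: divide_right_mono)
    also have "\<dots> = C * norm z" using r nz by (simp add: t_def C_def field_simps)
    finally show ?thesis using 1 by blast
  qed
  then obtain st where st: "\<And>z. norm (z - st z) \<le> norm z / 2" "\<And>z. norm (R (st z)) \<le> C * norm z"
    by metis
  have bnd: "norm (R x) \<le> norm x * (2 * C)" for x
  proof -
    define z where "z k = ((\<lambda>v. v - st v) ^^ k) x" for k
    have z0: "z 0 = x" and zS: "z (Suc k) = z k - st (z k)" for k by (simp_all add: z_def)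
    define w where "w k = st (z k)" for k
    have zn: "norm (z k) \<le> norm x * (1/2) ^ k" for k
    proof (induct k)
      case 0 then show ?case by (simp add: z0)
    next
      case (Suc k)
      have "norm (z (Suc k)) \<le> norm (z k) / 2" using st(1) by (simp add: zS)
      also have "\<dots> \<le> norm x * (1/2) ^ k / 2" using Suc by simp
      finally show ?case by simp
    qed
    have Rw: "norm (R (w k)) \<le> C * norm x * (1/2) ^ k" for k
      using st(2)[of "z k"] mult_left_mono[OF zn[of k] C0] by (simp add: w_def ac_simps)
    have psum: "(\<Sum>k<N. w k) = x - z N" for N
      by (induct N) (simp_all add: z0 zS w_def)
    have zlim: "z \<longlonglongrightarrow> 0"
    proof (rule Lim_null_comparison)
      show "\<forall>\<^sub>F k in sequentially. norm (z k) \<le> norm x * (1/2) ^ k" by (intro always_eventually allI zn)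
      show "(\<lambda>k. norm x * (1/2) ^ k) \<longlonglongrightarrow> 0"
        by (intro tendsto_mult_right_zero LIMSEQ_power_zero) simp
    qed
    have slim: "(\<lambda>N. \<Sum>k<N. w k) \<longlonglongrightarrow> x"
      unfolding psum using tendsto_diff[OF tendsto_const zlim, of x] by simp
    have gs: "summable (\<lambda>k. C * norm x * (1/2) ^ k)"
      by (intro summable_mult summable_geometric) simp
    have ws: "summable (\<lambda>k. R (w k))"
      by (rule summable_comparison_test'[OF gs, where N=0]) (simp add: Rw)
    have wns: "summable (\<lambda>k. norm (R (w k)))"
      by (rule summable_comparison_test'[OF gs, where N=0]) (simp add: Rw)
    have "(\<lambda>N. \<Sum>k<N. R (w k)) \<longlonglongrightarrow> (\<Sum>k. R (w k))" by (rule summable_LIMSEQ[OF ws])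
    moreover have "(\<Sum>k<N. R (w k)) = R (\<Sum>k<N. w k)" for N using lin by (simp add: linear_sum)
    ultimately have "(\<lambda>N. R (\<Sum>k<N. w k)) \<longlonglongrightarrow> (\<Sum>k. R (w k))" by simp
    then have Rx: "R x = (\<Sum>k. R (w k))" by (rule cg[OF slim])
    have "norm (\<Sum>k. R (w k)) \<le> (\<Sum>k. norm (R (w k)))" by (rule summable_norm[OF wns])
    also have "\<dots> \<le> (\<Sum>k. C * norm x * (1/2) ^ k)" by (intro suminf_le wns gs Rw)
    also have "\<dots> = C * norm x * 2" by (simp add: suminf_mult suminf_geometric)
    finally show ?thesis using Rx by (simp add: ac_simps)
  qed
  show ?thesis
    using lin bnd by (intro bounded_linear_intro[where K="2 * C"]) (auto simp: linear_add linear_scale)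
qed


lemma cinner_blin_left: "bounded_linear (\<lambda>v. cinner v (y::'a::complex_inner))"
  by (rule bounded_bilinear.bounded_linear_left[OF bounded_bilinear_cinner])

lemma cinner_blin_right: "bounded_linear (\<lambda>v. cinner (y::'a::complex_inner) v)"
  by (rule bounded_bilinear.bounded_linear_right[OF bounded_bilinear_cinner])

subsection \<open>Neumann series\<close>

definition neu :: "complex \<Rightarrow> ('a::chilbert_space \<Rightarrow> 'a) \<Rightarrow> 'a \<Rightarrow> 'a" where
  "neu l S x = (\<Sum>n. scaleC (1 / l ^ Suc n) ((S ^^ n) x))"

locale neu_setup =
  fixes S :: "'a::chilbert_space \<Rightarrow> 'a" and c :: real and l :: complex
  assumes Sb: "bounded_clinear S" and c0: "c \<ge> 0" and Sc: "\<And>x. norm (S x) \<le> c * norm x"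
    and cl: "c < cmod l"
begin

lemma l0: "l \<noteq> 0" using c0 cl by auto

lemma lpos: "cmod l > 0" using l0 by simp

lemma Spow_norm: "norm ((S ^^ n) x) \<le> c ^ n * norm x"
proof (induct n)
  case 0 then show ?case by simp
next
  case (Suc n)
  have "norm ((S ^^ Suc n) x) = norm (S ((S ^^ n) x))" by simp
  also have "\<dots> \<le> c * norm ((S ^^ n) x)" by (rule Sc)
  also have "\<dots> \<le> c * (c ^ n * norm x)" using Suc c0 by (intro mult_left_mono) auto
  finally show ?case by simp
qed

definition q :: real where "q = c / cmod l"

lemma q: "0 \<le> q" "q < 1" using c0 cl lpos by (auto simp: q_def divide_less_eq)

lemma term_bound: "norm (scaleC (1 / l ^ Suc n) ((S ^^ n) x)) \<le> (norm x / cmod l) * q ^ n"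
proof -
  have "norm (scaleC (1 / l ^ Suc n) ((S ^^ n) x)) = norm ((S ^^ n) x) / cmod l ^ Suc n"
    by (simp add: norm_scaleC norm_divide norm_power norm_mult)
  also have "\<dots> \<le> c ^ n * norm x / cmod l ^ Suc n"
    using lpos by (intro divide_right_mono Spow_norm) auto
  also have "\<dots> = (norm x / cmod l) * q ^ n"
    using lpos by (simp add: q_def power_divide field_simps)
  finally show ?thesis .
qed

lemma geo_summable: "summable (\<lambda>n. (norm x / cmod l) * q ^ n)"
  using q by (intro summable_mult summable_geometric) auto

lemma neu_norm_summable: "summable (\<lambda>n. norm (scaleC (1 / l ^ Suc n) ((S ^^ n) x)))"
proof (rule summable_comparison_test'[OF geo_summable, where N=0])
  fix n show "norm (norm (scaleC (1 / l ^ Suc n) ((S ^^ n) x))) \<le> (norm x / cmod l) * q ^ n"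
    using term_bound[of n x] by simp
qed

lemma neu_summable: "summable (\<lambda>n. scaleC (1 / l ^ Suc n) ((S ^^ n) x))"
  by (rule summable_norm_cancel[OF neu_norm_summable])

lemma Sswap: "S ((S ^^ n) x) = (S ^^ n) (S x)"
  by (induct n) auto

lemma Spow_bcl: "bounded_clinear (S ^^ n)" by (rule bcl_funpow[OF Sb])

lemma neu_bcl: "bounded_clinear (neu l S)"
proof (rule bcl_intro[where K="(1 / cmod l) / (1 - q)"])
  fix x y
  have "neu l S x + neu l S y = (\<Sum>n. scaleC (1 / l ^ Suc n) ((S ^^ n) x) + scaleC (1 / l ^ Suc n) ((S ^^ n) y))"
    unfolding neu_def by (rule suminf_add[OF neu_summable neu_summable])
  also have "\<dots> = neu l S (x + y)"
    unfolding neu_def by (simp only: bcl_add[OF Spow_bcl] scaleC_add_right)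
  finally show "neu l S (x + y) = neu l S x + neu l S y" by simp
  fix a
  have "scaleC a (neu l S x) = (\<Sum>n. scaleC a (scaleC (1 / l ^ Suc n) ((S ^^ n) x)))"
    unfolding neu_def by (rule bounded_linear.suminf[OF bounded_linear_scaleC_right neu_summable])
  also have "\<dots> = neu l S (scaleC a x)"
    by (simp add: neu_def bcl_scaleC[OF Spow_bcl] scaleC_scaleC mult.commute)
  finally show "neu l S (scaleC a x) = scaleC a (neu l S x)" by simp
next
  fix x
  have "norm (neu l S x) \<le> (\<Sum>n. norm (scaleC (1 / l ^ Suc n) ((S ^^ n) x)))"
    unfolding neu_def by (rule summable_norm[OF neu_norm_summable])
  also have "\<dots> \<le> (\<Sum>n. (norm x / cmod l) * q ^ n)"
    by (intro suminf_le neu_norm_summable geo_summable) (rule term_bound)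
  also have "(\<Sum>n. (norm x / cmod l) * q ^ n) = (norm x / cmod l) * (\<Sum>n. q ^ n)"
    by (rule suminf_mult) (rule summable_geometric, use q in auto)
  also have "(\<Sum>n. q ^ n) = 1 / (1 - q)"
    by (rule suminf_geometric) (use q in auto)
  also have "(norm x / cmod l) * (1 / (1 - q)) = norm x * ((1 / cmod l) / (1 - q))" by simp
  finally show "norm (neu l S x) \<le> norm x * ((1 / cmod l) / (1 - q))" .
qed

lemma neu_left: "scaleC l (neu l S x) - S (neu l S x) = x"
proof -
  define a where "a n = scaleC (1 / l ^ Suc n) ((S ^^ n) x)" for n
  define b where "b n = scaleC (1 / l ^ n) ((S ^^ n) x)" for n
  have as: "summable a" unfolding a_def by (rule neu_summable)
  have "scaleC l (neu l S x) = (\<Sum>n. scaleC l (a n))"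
    unfolding neu_def a_def[symmetric] by (rule bounded_linear.suminf[OF bounded_linear_scaleC_right as])
  also have "(\<lambda>n. scaleC l (a n)) = b"
    using l0 by (auto simp: a_def b_def scaleC_scaleC field_simps)
  finally have 1: "scaleC l (neu l S x) = suminf b" .
  have bs: "summable b"
    using bounded_linear.summable[OF bounded_linear_scaleC_right as, of l]
      \<open>(\<lambda>n. scaleC l (a n)) = b\<close> by simp
  have "suminf b = (\<Sum>n. b (Suc n)) + b 0" using suminf_split_head[OF bs] by simp
  also have "b 0 = x" by (simp add: b_def scaleC_one)
  also have "(\<lambda>n. b (Suc n)) = (\<lambda>n. S (a n))"
    by (auto simp: a_def b_def bcl_scaleC[OF Sb])
  also have "(\<Sum>n. S (a n)) = S (neu l S x)"
    unfolding neu_def a_def[symmetric] by (rule bcl_suminf[OF Sb as, symmetric])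
  finally show ?thesis using 1 by simp
qed

lemma neu_comm_S: "neu l S (S x) = S (neu l S x)"
proof -
  have "S (neu l S x) = (\<Sum>n. S (scaleC (1 / l ^ Suc n) ((S ^^ n) x)))"
    unfolding neu_def by (rule bcl_suminf[OF Sb neu_summable])
  also have "\<dots> = neu l S (S x)"
    by (simp only: neu_def bcl_scaleC[OF Sb] Sswap)
  finally show ?thesis by simp
qed

lemma neu_right: "neu l S (scaleC l x - S x) = x"
  using neu_left[of x]
  by (simp add: bcl_diff[OF neu_bcl] bcl_scaleC[OF neu_bcl] neu_comm_S)

end

lemma neu_comm:
  assumes N1: "neu_setup S1 c1 l" and N2: "neu_setup S2 c2 l"
    and Q: "bounded_clinear Q" and QS: "\<And>x. Q (S1 x) = S2 (Q x)"
  shows "Q (neu l S1 x) = neu l S2 (Q x)"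
proof -
  have QSn: "Q ((S1 ^^ n) x) = (S2 ^^ n) (Q x)" for n x by (induct n) (simp_all add: QS)
  have "Q (neu l S1 x) = (\<Sum>n. Q (scaleC (1 / l ^ Suc n) ((S1 ^^ n) x)))"
    unfolding neu_def by (rule bcl_suminf[OF Q neu_setup.neu_summable[OF N1]])
  also have "\<dots> = neu l S2 (Q x)" by (simp add: neu_def bcl_scaleC[OF Q] QSn)
  finally show ?thesis .
qed

lemma neu_adj:
  assumes N1: "neu_setup S c l" and N2: "neu_setup S' c' (cnj l)"
    and adj: "\<And>x y. cinner (S x) y = cinner x (S' y)"
  shows "cinner (neu l S x) y = cinner x (neu (cnj l) S' y)"
proof -
  have adjn: "cinner ((S ^^ n) x) y = cinner x ((S' ^^ n) y)" for n x y
  proof (induct n arbitrary: x y)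
    case 0 then show ?case by simp
  next
    case (Suc n)
    have "cinner ((S ^^ Suc n) x) y = cinner (S ((S ^^ n) x)) y" by simp
    also have "\<dots> = cinner ((S ^^ n) x) (S' y)" by (rule adj)
    also have "\<dots> = cinner x ((S' ^^ n) (S' y))" by (rule Suc)
    also have "(S' ^^ n) (S' y) = (S' ^^ Suc n) y" by (simp add: funpow_swap1)
    finally show ?case .
  qed
  have "cinner (neu l S x) y = (\<Sum>n. cinner (scaleC (1 / l ^ Suc n) ((S ^^ n) x)) y)"
    unfolding neu_def
    by (rule bounded_linear.suminf[OF cinner_blin_left neu_setup.neu_summable[OF N1]])
  also have "\<dots> = (\<Sum>n. cinner x (scaleC (1 / cnj l ^ Suc n) ((S' ^^ n) y)))"
    by (simp add: cinner_scaleC_left cinner_scaleC_right adjn)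
  also have "\<dots> = cinner x (neu (cnj l) S' y)"
    unfolding neu_def
    by (rule bounded_linear.suminf[OF cinner_blin_right neu_setup.neu_summable[OF N2], symmetric])
  finally show ?thesis .
qed


locale main_setup =
  fixes A T :: "'a::chilbert_space \<Rightarrow> 'a"
  assumes posA: "positive_op A" and A0: "A \<noteq> (\<lambda>_. 0)" and TB: "T \<in> BA A"
begin

abbreviation B where "B \<equiv> sqrt_op A"
abbreviation V where "V \<equiv> closure (range B)"
abbreviation P where "P \<equiv> proj V"

lemma B_pos: "positive_op B" using sqrt_op_spec[OF posA] by blast
lemma BB: "B (B x) = A x" using sqrt_op_spec[OF posA] by blast
lemma B_bcl: "bounded_clinear B" by (rule pos_bcl[OF B_pos])
lemma Bsa: "cinner (B x) y = cinner x (B y)" by (rule pos_selfadj[OF B_pos])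
lemma A_bcl: "bounded_clinear A" by (rule pos_bcl[OF posA])
lemma Asa: "cinner (A x) y = cinner x (A y)" by (rule pos_selfadj[OF posA])
lemma T_bcl: "bounded_clinear T" using TB by (simp add: BA_def)
lemma TBr: "\<exists>w. adj T (B x) = B w"
proof -
  have sub: "range (adj T \<circ> B) \<subseteq> range B" using TB by (simp add: BA_def)
  have "(adj T \<circ> B) x \<in> range (adj T \<circ> B)" by (rule rangeI)
  then have "adj T (B x) \<in> range B" using sub by auto
  then show ?thesis by (auto simp: image_def)
qed
lemma Ts_bcl: "bounded_clinear (adj T)" by (rule adj_bcl[OF T_bcl])
lemma Tadj: "cinner (T x) y = cinner x (adj T y)" by (rule adj_prop[OF T_bcl])

lemma V_cc: "closed_csub V" by (rule closed_csub_closure_range[OF B_bcl])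

lemma B_in_V: "B x \<in> V"
proof -
  have "B x \<in> range B" by (rule rangeI)
  then show ?thesis using closure_subset[of "range B"] by (rule subsetD[rotated])
qed

lemma orth_of_ker:
  assumes u: "B u = 0" and v: "v \<in> V"
  shows "cinner u v = 0"
proof -
  obtain f where f: "\<And>n. f n \<in> range B" "f \<longlonglongrightarrow> v" using v by (meson closure_sequential)
  have "(\<lambda>n. cinner u (f n)) \<longlonglongrightarrow> cinner u v"
    by (rule bounded_linear.tendsto[OF cinner_blin_right f(2)])
  moreover have "cinner u (f n) = 0" for n
  proof -
    obtain w where "f n = B w" using f(1)[of n] by blast
    then show ?thesis using Bsa[of u w] u by simp
  qed
  ultimately have "(\<lambda>n. 0) \<longlonglongrightarrow> cinner u v" by simp
  then show ?thesis using LIMSEQ_unique[OF tendsto_const] by metis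
qed

lemma ker_of_orth:
  assumes "\<And>v. v \<in> V \<Longrightarrow> cinner u v = 0"
  shows "B u = 0"
proof -
  have "cinner (B u) (B u) = cinner u (B (B u))" by (rule Bsa)
  also have "\<dots> = 0" using assms B_in_V by blast
  finally show ?thesis by simp
qed

lemma P_in: "P y \<in> V" by (rule closed_csub.proj_in[OF V_cc])

lemma B_orthP: "B (y - P y) = 0"
  by (rule ker_of_orth) (rule closed_csub.proj_orth[OF V_cc])

lemma BP: "B (P y) = B y"
  using B_orthP[of y] by (simp add: bcl_diff[OF B_bcl])

lemma AP: "A (P y) = A y"
  using BB[of "P y"] BP[of y] BB[of y] by simp

lemma P_ker: "B u = 0 \<Longrightarrow> P u = 0"
  by (rule closed_csub.proj_zero[OF V_cc]) (rule orth_of_ker)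

lemma P_V: "v \<in> V \<Longrightarrow> P v = v" by (rule closed_csub.proj_id[OF V_cc])

lemma P_bcl: "bounded_clinear P" by (rule closed_csub.proj_bcl[OF V_cc])

lemma P_sa: "cinner (P x) y = cinner x (P y)" by (rule closed_csub.proj_selfadj[OF V_cc])

lemma V_unique:
  assumes "v1 \<in> V" "v2 \<in> V" "B v1 = B v2"
  shows "v1 = v2"
proof -
  have sub: "csubspace V" using V_cc by (simp add: closed_csub_def)
  have d: "v1 - v2 \<in> V" using assms sub by (simp add: csubspace_diff)
  have "B (v1 - v2) = 0" using assms by (simp add: bcl_diff[OF B_bcl])
  then have "cinner (v1 - v2) (v1 - v2) = 0" using orth_of_ker d by simp
  then show ?thesis by simp
qed

subsection \<open>The operator \<open>T\<^sup>\<diamond>\<close>\<close>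

definition R0 :: "'a \<Rightarrow> 'a" where "R0 x = (THE v. v \<in> V \<and> B v = adj T (B x))"

lemma R0_ex: "\<exists>v. v \<in> V \<and> B v = adj T (B x)"
proof -
  obtain w where w: "adj T (B x) = B w" using TBr by blast
  show ?thesis by (intro exI[of _ "P w"]) (simp add: P_in BP w)
qed

lemma R0_spec: "R0 x \<in> V \<and> B (R0 x) = adj T (B x)"
proof -
  have "\<exists>!v. v \<in> V \<and> B v = adj T (B x)"
  proof (rule ex_ex1I)
    show "\<exists>v. v \<in> V \<and> B v = adj T (B x)" by (rule R0_ex)
    fix v1 v2 assume "v1 \<in> V \<and> B v1 = adj T (B x)" "v2 \<in> V \<and> B v2 = adj T (B x)"
    then show "v1 = v2" using V_unique by auto
  qed
  then show ?thesis unfolding R0_def by (rule theI')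
qed

lemma R0_eq: "v \<in> V \<Longrightarrow> B v = adj T (B x) \<Longrightarrow> R0 x = v"
proof -
  assume "v \<in> V" "B v = adj T (B x)"
  moreover have "R0 x \<in> V" "B (R0 x) = adj T (B x)" using R0_spec by auto
  ultimately show "R0 x = v" using V_unique by auto
qed

lemma R0_add: "R0 (x + y) = R0 x + R0 y"
proof (rule R0_eq)
  have sub: "csubspace V" using V_cc by (simp add: closed_csub_def)
  show "R0 x + R0 y \<in> V" using R0_spec sub by (simp add: csubspace_add)
  show "B (R0 x + R0 y) = adj T (B (x + y))"
    using R0_spec by (simp add: bcl_add[OF B_bcl] bcl_add[OF Ts_bcl])
qed

lemma R0_scaleC: "R0 (scaleC c x) = scaleC c (R0 x)"
proof (rule R0_eq)
  have sub: "csubspace V" using V_cc by (simp add: closed_csub_def)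
  show "scaleC c (R0 x) \<in> V" using R0_spec sub by (simp add: csubspace_scaleC)
  show "B (scaleC c (R0 x)) = adj T (B (scaleC c x))"
    using R0_spec by (simp add: bcl_scaleC[OF B_bcl] bcl_scaleC[OF Ts_bcl])
qed

lemma R0_bcl: "bounded_clinear R0"
proof -
  have lin: "linear R0"
    by (rule linearI) (simp_all add: R0_add scaleR_scaleC R0_scaleC)
  have "bounded_linear R0"
  proof (rule closed_graph_bounded[OF lin])
    fix s x y assume s: "s \<longlonglongrightarrow> x" and Rs: "(\<lambda>n. R0 (s n)) \<longlonglongrightarrow> y"
    have cl: "\<forall>x l. (\<forall>n. x n \<in> V) \<and> x \<longlonglongrightarrow> l \<longrightarrow> l \<in> V"
      using closed_closure[of "range B"] by (simp only: closed_sequential_limits)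
    have "\<forall>n. R0 (s n) \<in> V" using R0_spec by simp
    then have "y \<in> V" using cl[rule_format, of "\<lambda>n. R0 (s n)" y] Rs by simp
    moreover have "B y = adj T (B x)"
    proof -
      have "(\<lambda>n. B (R0 (s n))) \<longlonglongrightarrow> B y" by (rule bcl_tendsto[OF B_bcl Rs])
      moreover have "(\<lambda>n. adj T (B (s n))) \<longlonglongrightarrow> adj T (B x)"
        by (rule bcl_tendsto[OF Ts_bcl bcl_tendsto[OF B_bcl s]])
      moreover have "(\<lambda>n. B (R0 (s n))) = (\<lambda>n. adj T (B (s n)))" using R0_spec by simp
      ultimately show ?thesis using LIMSEQ_unique by auto
    qed
    ultimately show "R0 x = y" by (rule R0_eq)
  qed
  then show ?thesis by (simp add: bounded_clinear_def R0_scaleC)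
qed

lemma diamond_eq: "diamond A T = R0"
  unfolding diamond_def
proof (rule the_equality)
  show "bounded_clinear R0 \<and> adj T \<circ> B = B \<circ> R0 \<and> range R0 \<subseteq> V"
    using R0_bcl R0_spec by (auto simp: o_def)
  fix R assume R: "bounded_clinear R \<and> adj T \<circ> B = B \<circ> R \<and> range R \<subseteq> V"
  show "R = R0"
  proof
    fix x
    have "R x \<in> V" using R by blast
    moreover have "B (R x) = adj T (B x)" using fun_cong[OF conjunct1[OF conjunct2[OF R]], of x] by simp
    ultimately have "R0 x = R x" by (rule R0_eq)
    then show "R x = R0 x" by simp
  qed
qed

abbreviation D where "D \<equiv> diamond A T"

lemma D_bcl: "bounded_clinear D" using diamond_eq R0_bcl by simp
lemma BD: "B (D x) = adj T (B x)" using diamond_eq R0_spec by simp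
lemma DV: "D x \<in> V" using diamond_eq R0_spec by simp
lemma Ds_bcl: "bounded_clinear (adj D)" by (rule adj_bcl[OF D_bcl])

lemma BT: "B (T x) = adj D (B x)"
proof (rule cinner_ext_left)
  fix z
  have "cinner (B (T x)) z = cinner (T x) (B z)" by (rule Bsa)
  also have "\<dots> = cinner x (adj T (B z))" by (rule Tadj)
  also have "\<dots> = cinner x (B (D z))" by (simp add: BD)
  also have "\<dots> = cinner (B x) (D z)" by (simp add: Bsa)
  also have "\<dots> = cinner (adj D (B x)) z" by (simp add: adj_prop'[OF D_bcl])
  finally show "cinner (B (T x)) z = cinner (adj D (B x)) z" .
qed

end


context main_setup
begin

lemma normA_eq: "normA A x = norm (B x)"
proof -
  have "cinner (A x) x = cinner (B x) (B x)" using Bsa[of "B x" x] BB[of x] by simp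
  then show ?thesis by (simp add: normA_def Re_cinner_self)
qed

abbreviation VA where "VA \<equiv> closure (range A)"

lemma VA_cc: "closed_csub VA" by (rule closed_csub_closure_range[OF A_bcl])

lemma VA_sub: "csubspace VA" using VA_cc by (simp add: closed_csub_def)

lemma A_in_VA: "A x \<in> VA"
proof -
  have "A x \<in> range A" by (rule rangeI)
  then show ?thesis using closure_subset[of "range A"] by (rule subsetD[rotated])
qed

lemma B_PA: "B (proj VA w) = B w"
proof -
  define u where "u = w - proj VA w"
  have "cinner (A u) z = 0" for z
  proof -
    have "cinner (A u) z = cinner u (A z)" by (rule Asa)
    also have "\<dots> = 0" unfolding u_def by (rule closed_csub.proj_orth[OF VA_cc A_in_VA])
    finally show ?thesis .
  qed
  then have Au: "A u = 0" by (metis cinner_self_eq_0)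
  have "cinner (B u) (B u) = cinner u (B (B u))" by (rule Bsa)
  also have "\<dots> = 0" by (simp add: BB Au)
  finally have "B u = 0" by simp
  then show ?thesis by (simp add: u_def bcl_diff[OF B_bcl])
qed

lemma scale_unit:
  assumes "B u \<noteq> 0"
  shows "norm (B (scaleC (complex_of_real (1 / norm (B u))) u)) = 1"
  using assms by (simp add: bcl_scaleC[OF B_bcl] norm_scaleC norm_divide)

lemma exists_unit: "\<exists>x0. x0 \<in> VA \<and> norm (B x0) = 1"
proof -
  obtain z where z: "A z \<noteq> 0" using A0 by auto
  define u where "u = A z"
  have Bu: "B u \<noteq> 0"
  proof
    assume h: "B u = 0"
    have "cinner (A z) (A z) = cinner (B (B z)) (A z)" by (simp add: BB)
    also have "\<dots> = cinner (B z) (B (A z))" by (rule Bsa)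
    also have "\<dots> = 0" using h by (simp add: u_def)
    finally show False using z by simp
  qed
  have "scaleC (complex_of_real (1 / norm (B u))) u \<in> VA"
    using VA_sub A_in_VA by (simp add: u_def csubspace_scaleC)
  then show ?thesis using scale_unit[OF Bu] by blast
qed

lemma opn:
  assumes S: "bounded_clinear S" and Q: "bounded_clinear Q" and SQ: "\<And>w. B (S w) = Q (B w)"
  shows "0 \<le> opnormA A S \<and> (\<forall>w. norm (B (S w)) \<le> opnormA A S * norm (B w))"
proof -
  define M where "M = {normA A (S x) | x. x \<in> VA \<and> normA A x = 1}"
  have opM: "opnormA A S = Sup M" by (simp add: opnormA_def M_def)
  obtain K where K: "\<forall>x. norm (Q x) \<le> norm x * K" using bcl_bound[OF Q] by blast
  have bdd: "bdd_above M"
  proof (rule bdd_aboveI[of _ K])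
    fix m assume "m \<in> M"
    then obtain x where x: "m = norm (B (S x))" "norm (B x) = 1" by (auto simp: M_def normA_eq)
    then show "m \<le> K" using K SQ[of x] by (metis mult_1)
  qed
  have upper: "norm (B (S x)) \<le> Sup M" if "x \<in> VA" "norm (B x) = 1" for x
  proof (rule cSup_upper[OF _ bdd])
    show "norm (B (S x)) \<in> M" using that by (auto simp: M_def normA_eq)
  qed
  obtain x0 where x0: "x0 \<in> VA" "norm (B x0) = 1" using exists_unit by blast
  have nonneg: "0 \<le> Sup M" using upper[OF x0] norm_ge_zero order_trans by blast
  have bound: "norm (B (S w)) \<le> Sup M * norm (B w)" for w
  proof -
    define u where "u = proj VA w"
    have uVA: "u \<in> VA" unfolding u_def by (rule closed_csub.proj_in[OF VA_cc])
    have Buw: "B u = B w" unfolding u_def by (rule B_PA)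
    have BSu: "B (S u) = B (S w)" using SQ[of u] SQ[of w] Buw by simp
    show ?thesis
    proof (cases "B w = 0")
      case True
      then show ?thesis using SQ[of w] by (simp add: bcl_zero[OF Q])
    next
      case False
      then have Bu0: "B u \<noteq> 0" using Buw by simp
      define c where "c = complex_of_real (1 / norm (B u))"
      define u' where "u' = scaleC c u"
      have "u' \<in> VA" using VA_sub uVA by (simp add: u'_def csubspace_scaleC)
      moreover have "norm (B u') = 1" unfolding u'_def c_def by (rule scale_unit[OF Bu0])
      ultimately have "norm (B (S u')) \<le> Sup M" by (rule upper)
      moreover have "norm (B (S u')) = norm (B (S u)) / norm (B u)"
        by (simp add: u'_def c_def bcl_scaleC[OF S] bcl_scaleC[OF B_bcl] norm_scaleC norm_divide)
      ultimately have "norm (B (S u)) / norm (B u) \<le> Sup M" by simp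
      then have "norm (B (S u)) \<le> Sup M * norm (B u)" using Bu0 by (simp add: divide_le_eq)
      then show ?thesis using BSu Buw by simp
    qed
  qed
  show ?thesis using nonneg bound opM by simp
qed

abbreviation Ta where "Ta \<equiv> opnormA A T"
abbreviation Da where "Da \<equiv> opnormA A D"

lemma T_opn: "0 \<le> Ta \<and> (\<forall>w. norm (B (T w)) \<le> Ta * norm (B w))"
  by (rule opn[OF T_bcl Ds_bcl BT])

lemma D_opn: "0 \<le> Da \<and> (\<forall>w. norm (B (D w)) \<le> Da * norm (B w))"
  by (rule opn[OF D_bcl Ts_bcl BD])

lemma Vnorm:
  assumes v: "v \<in> V" and K: "K \<ge> 0" and h: "\<And>w. cmod (cinner v (B w)) \<le> K * norm (B w)"
  shows "norm v \<le> K"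
proof -
  obtain f where f: "\<And>n. f n \<in> range B" "f \<longlonglongrightarrow> v" using v by (meson closure_sequential)
  have hf: "cmod (cinner v (f n)) \<le> K * norm (f n)" for n
  proof -
    obtain w where "f n = B w" using f(1)[of n] by blast
    then show ?thesis using h[of w] by simp
  qed
  have l1: "(\<lambda>n. cmod (cinner v (f n))) \<longlonglongrightarrow> cmod (cinner v v)"
    by (intro tendsto_norm bounded_linear.tendsto[OF cinner_blin_right f(2)])
  have l2: "(\<lambda>n. K * norm (f n)) \<longlonglongrightarrow> K * norm v"
    by (intro tendsto_mult tendsto_const tendsto_norm f(2))
  have "cmod (cinner v v) \<le> K * norm v"
    by (rule LIMSEQ_le[OF l1 l2]) (simp add: hf)
  then have "norm v * norm v \<le> K * norm v" by (simp add: cinner_self power2_eq_square norm_mult del: of_real_power)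
  then show ?thesis using K
    by (cases "v = 0") (simp_all add: mult_le_cancel_right_pos)
qed

lemma D_norm: "norm (D x) \<le> Ta * norm x"
proof (rule Vnorm[OF DV])
  show "0 \<le> Ta * norm x" using T_opn by simp
  fix w
  have "cinner (D x) (B w) = cinner x (adj D (B w))" by (rule adj_prop[OF D_bcl])
  also have "\<dots> = cinner x (B (T w))" by (simp add: BT)
  finally have "cmod (cinner (D x) (B w)) \<le> norm x * norm (B (T w))"
    using cinner_Cauchy_Schwarz by simp
  also have "\<dots> \<le> norm x * (Ta * norm (B w))" using T_opn by (intro mult_left_mono) auto
  finally show "cmod (cinner (D x) (B w)) \<le> Ta * norm x * norm (B w)" by (simp add: ac_simps)
qed

lemma PT_norm: "norm (P (T x)) \<le> Da * norm x"
proof (rule Vnorm[OF P_in])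
  show "0 \<le> Da * norm x" using D_opn by simp
  fix w
  have "cinner (P (T x)) (B w) = cinner (T x) (P (B w))" by (rule P_sa)
  also have "\<dots> = cinner (T x) (B w)" by (simp add: P_V B_in_V)
  also have "\<dots> = cinner x (adj T (B w))" by (rule Tadj)
  also have "\<dots> = cinner x (B (D w))" by (simp add: BD)
  finally have "cmod (cinner (P (T x)) (B w)) \<le> norm x * norm (B (D w))"
    using cinner_Cauchy_Schwarz by simp
  also have "\<dots> \<le> norm x * (Da * norm (B w))" using D_opn by (intro mult_left_mono) auto
  finally show "cmod (cinner (P (T x)) (B w)) \<le> Da * norm x * norm (B w)" by (simp add: ac_simps)
qed

lemma S_adj: "cinner (P (T x)) y = cinner x (adj T (P y))"
  by (simp add: P_sa Tadj)

lemma S'_norm: "norm (adj T (P y)) \<le> Da * norm y"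
  by (rule adjoint_bound[of "\<lambda>x. P (T x)"]) (use S_adj PT_norm D_opn in auto)

end


context main_setup
begin

lemma invertible:
  assumes l: "cmod l > max Ta Da"
  shows "A_invertible A (\<lambda>x. scaleC l x - T x)"
proof -
  have Ta0: "0 \<le> Ta" using T_opn by simp
  have Da0: "0 \<le> Da" using D_opn by simp
  define S where "S x = P (T x)" for x
  define S' where "S' y = adj T (P y)" for y
  have S_bcl: "bounded_clinear S" unfolding S_def[abs_def] by (rule bcl_compose[OF P_bcl T_bcl])
  have S'_bcl: "bounded_clinear S'" unfolding S'_def[abs_def] by (rule bcl_compose[OF Ts_bcl P_bcl])
  have N1: "neu_setup S Da l"
    by unfold_locales (use S_bcl Da0 PT_norm l in \<open>auto simp: S_def\<close>)
  have N2: "neu_setup S' Da (cnj l)"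
    by unfold_locales (use S'_bcl Da0 S'_norm l in \<open>auto simp: S'_def\<close>)
  have N3: "neu_setup D Ta (cnj l)"
    by unfold_locales (use D_bcl Ta0 D_norm l in \<open>auto\<close>)
  define N where "N = neu l S"
  have N_bcl: "bounded_clinear N" unfolding N_def by (rule neu_setup.neu_bcl[OF N1])
  define L where "L x = scaleC l x - T x" for x
  have L_bcl: "bounded_clinear L" unfolding L_def[abs_def] by (intro bcl_diff_op bcl_scaleC_id T_bcl)
  have l0: "l \<noteq> 0" by (rule neu_setup.l0[OF N1])
  have AT: "A (T y) = A (S y)" for y by (simp add: S_def AP)
  have AL: "A (L y) = A (scaleC l y - S y)" for y
    by (simp add: L_def bcl_diff[OF A_bcl] AT)
  have ALN: "A (L (N x)) = A x" for x
    using AL[of "N x"] neu_setup.neu_left[OF N1, of x] by (simp add: N_def)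
  have ANL: "A (N (L x)) = A x" for x
  proof -
    define z where "z = T x - S x"
    have Bz: "B z = 0" unfolding z_def S_def by (rule B_orthP)
    have Sz: "S z = 0"
    proof -
      have "B (T z) = adj D (B z)" by (rule BT)
      also have "\<dots> = 0" by (simp add: Bz bcl_zero[OF Ds_bcl])
      finally show ?thesis unfolding S_def by (rule P_ker)
    qed
    have "N (scaleC l z - S z) = z" unfolding N_def by (rule neu_setup.neu_right[OF N1])
    then have "scaleC l (N z) = z" using Sz by (simp add: bcl_scaleC[OF N_bcl])
    then have Nz: "N z = scaleC (1 / l) z"
    proof -
      have "scaleC (1 / l) (scaleC l (N z)) = scaleC (1 / l) z" using \<open>scaleC l (N z) = z\<close> by simp
      then show ?thesis using l0 by (simp add: scaleC_scaleC scaleC_one)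
    qed
    have "A (N z) = B (B (N z))" by (simp add: BB)
    also have "\<dots> = 0" by (simp add: Nz bcl_scaleC[OF B_bcl] Bz bcl_zero[OF B_bcl])
    finally have ANz: "A (N z) = 0" .
    have "L x = (scaleC l x - S x) - z" by (simp add: L_def z_def)
    then have "N (L x) = N (scaleC l x - S x) - N z" by (simp add: bcl_diff[OF N_bcl])
    also have "N (scaleC l x - S x) = x" unfolding N_def by (rule neu_setup.neu_right[OF N1])
    finally have "N (L x) = x - N z" .
    then show ?thesis by (simp add: bcl_diff[OF A_bcl] ANz)
  qed
  have L_BA: "L \<in> BA A"
  proof -
    have adjL: "adj L = (\<lambda>y. scaleC (cnj l) y - adj T y)"
      by (rule adj_unique)
        (simp add: L_def cinner_diff_left cinner_diff_right cinner_scaleC_left cinner_scaleC_right Tadj)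
    have "range (adj L \<circ> B) \<subseteq> range B"
    proof
      fix y assume "y \<in> range (adj L \<circ> B)"
      then obtain x where x: "y = adj L (B x)" by auto
      have "y = B (scaleC (cnj l) x - D x)"
        by (simp add: x adjL bcl_diff[OF B_bcl] bcl_scaleC[OF B_bcl] BD)
      then show "y \<in> range B" by auto
    qed
    then show ?thesis using L_bcl by (simp add: BA_def)
  qed
  have N_BA: "N \<in> BA A"
  proof -
    have adjN: "adj N = neu (cnj l) S'"
      by (rule adj_unique) (unfold N_def, rule neu_adj[OF N1 N2], simp add: S_def S'_def S_adj)
    have QS: "B (D x) = S' (B x)" for x by (simp add: S'_def P_V B_in_V BD)
    have "range (adj N \<circ> B) \<subseteq> range B"
    proof
      fix y assume "y \<in> range (adj N \<circ> B)"
      then obtain x where x: "y = adj N (B x)" by auto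
      have "B (neu (cnj l) D x) = neu (cnj l) S' (B x)"
        by (rule neu_comm[of D Ta "cnj l" S' Da B x, OF N3 N2 B_bcl QS])
      then have "y = B (neu (cnj l) D x)" by (simp add: x adjN)
      then show "y \<in> range B" by auto
    qed
    then show ?thesis using N_bcl by (simp add: BA_def)
  qed
  have N0: "N \<noteq> (\<lambda>_. 0)"
  proof
    assume "N = (\<lambda>_. 0)"
    then have "A x = 0" for x using ALN[of x] by (simp add: bcl_zero[OF L_bcl] bcl_zero[OF A_bcl])
    then show False using A0 by auto
  qed
  have "A \<circ> L \<circ> N = A" using ALN by (auto simp: o_def)
  moreover have "A \<circ> N \<circ> L = A" using ANL by (auto simp: o_def)
  ultimately show ?thesis using L_BA N_BA N0 unfolding A_invertible_def L_def[abs_def] by blast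
qed

end

theorem mainTheorem10:
  fixes A T :: "'a::chilbert_space \<Rightarrow> 'a"
  assumes "positive_op A"
    and "A \<noteq> (\<lambda>_. 0)"
    and "T \<in> BA A"
  shows "(\<forall>l\<in>spectrumA A T. cmod l \<le> max (opnormA A T) (opnormA A (diamond A T)))
         \<and> bounded (spectrumA A T)"
proof -
  interpret main_setup A T using assms by unfold_locales
  have 1: "\<forall>l\<in>spectrumA A T. cmod l \<le> max (opnormA A T) (opnormA A (diamond A T))"
  proof
    fix l assume "l \<in> spectrumA A T"
    then have "\<not> A_invertible A (\<lambda>x. scaleC l x - T x)" by (simp add: spectrumA_def)
    then show "cmod l \<le> max (opnormA A T) (opnormA A (diamond A T))"
      using invertible[of l] by fastforce
  qed
  have "spectrumA A T \<subseteq> cball 0 (max (opnormA A T) (opnormA A (diamond A T)))"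
    using 1 by (auto simp: dist_norm)
  then have "bounded (spectrumA A T)" by (rule bounded_subset[OF bounded_cball])
  with 1 show ?thesis by blast
qed


end
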